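(* Let $\mathcal{G}$ be a pdCG and let $\mathcal{A}$ be a set of pdCGs such that (i) the graphs in $\mathcal{A}$ are pairwise $\preceq_{t}$-incomparable and (ii) every $\mathcal{F}\in \mathcal{A}$ is covered by $\mathcal{G}$ in the model inclusion order, so that $\mathcal{P}(\mathcal{F})$ is a neighbouring submodel of $\mathcal{P}(\mathcal{G})$. Then, for every $\mathcal{H}\in\mathcal{A}$ the set $$\mathcal{B}=\{\mathcal{F} \wedge_{s} \mathcal{H} \mid \mathcal{F} \in \mathcal{A} \setminus \{\mathcal{H}\}\}=\{\mathcal{F} \wedge_{t} \mathcal{H} \mid \mathcal{F} \in \mathcal{A} \setminus \{\mathcal{H}\}\}$$ has the same properties as $\mathcal{A}$, that is, (i) the graphs in $\mathcal{B}$ are pairwise $\preceq_{t}$-incomparable and (ii) every $\mathcal{F}\in \mathcal{B}$ is covered by $\mathcal{H}$ in the model inclusion order, so that $\mathcal{P}(\mathcal{F})$ is a neighbouring submodel of $\mathcal{P}(\mathcal{H})$.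
   Context: Let $V=\{1,\dots,p\}$ and let $\tau$ be a twin-pairing function on $V$, i.e. $\tau(i)\in V$ with $\tau(\tau(i))=i$ and $\tau(i)\neq i$; it is extended to edges by $\tau(i,j)=(\tau(i),\tau(j))$ (endpoints reordered so the smaller comes first) and to sets elementwise. Fix a partition $(L,R)$ of $V$ with $\tau(L)=R$, numbered so that $L=\{1,\dots,q\}$, $R=\{q+1,\dots,p\}$. Let $F_V=\{(i,j): i,j\in V, i<j\}$, $F_L=\{(i,j)\in F_V: i<\tau(j)\}$, $F_R=\{(i,j)\in F_V: i>\tau(j)\}$. A coloured graph $\mathcal G=(\mathcal V,\mathcal E)$ consists of a partition $\mathcal V$ of $V$ into vertex colour classes and a partition $\mathcal E$ of an edge set $E\subseteq F_V$ into edge colour classes. It is a coloured graph for paired data (pdCG) if every colour class is either atomic (a single element) or twin-pairing (of the form $\{i,\tau(i)\}$ or $\{(i,j),\tau(i,j)\}$ with $(i,j)\neq\tau(i,j)$). The associated RCON model for paired data $\mathcal{P}(\mathcal G)$ is the family of Gaussian distributions whose concentration matrix has zero entries for missing edges and equal entries for vertices or edges in the same colour class; $\mathcal{P}$ denotes the family of all pdCGs on $V$. Every pdCG is equivalently represented by the quadruplet $(V,E,\mathbb L,\mathbb E)$ where $E$ is the union of the edge colour classes, $E_L=E\cap F_L$, $E_R=E\cap F_R$, $\mathbb L=\{i\in L:\{i\}\in\mathcal V\}$ and $\mathbb E=\{(i,j)\in E_L\cap\tau(E_R): \{(i,j)\}\in\mathcal E\}$. The model inclusion order is $\mathcal H\preceq_s\mathcal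 G$ iff $\mathcal P(\mathcal H)\subseteq\mathcal P(\mathcal G)$ (iff the edge set of $\mathcal H$ is contained in that of $\mathcal G$ and every vertex, resp. edge, colour class of $\mathcal H$ is a union of vertex, resp. edge, colour classes of $\mathcal G$); $\mathcal H$ is covered by $\mathcal G$ in this order if $\mathcal H\prec_s\mathcal G$ and no $\mathcal F\in\mathcal P$ satisfies $\mathcal H\prec_s\mathcal F\prec_s\mathcal G$; $\wedge_s$ denotes the meet in the lattice $\langle\mathcal P,\preceq_s\rangle$. The twin order is $\mathcal H\preceq_t\mathcal G$ iff $E_{\mathcal H}\subseteq E_{\mathcal G}$, $\mathbb L_{\mathcal H}\subseteq\mathbb L_{\mathcal G}$ and $\mathbb E_{\mathcal H}\subseteq\mathbb E_{\mathcal G}$; $\langle\mathcal P,\preceq_t\rangle$ is a lattice whose meet is $\mathcal G\wedge_t\mathcal H=(V,E_{\mathcal G}\cap E_{\mathcal H},\mathbb L_{\mathcal G}\cap\mathbb L_{\mathcal H},\mathbb E_{\mathcal G}\cap\mathbb E_{\mathcal H})$. *)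

theory Defs
  imports Main
begin

text \<open>Vertices are V = {1..p}; L = {1..q}, R = {q+1..p}.
  A coloured graph is a pair (vertex colour classes, edge colour classes);
  edges are pairs (i,j) with i < j.\<close>

type_synonym cgraph = "nat set set \<times> (nat \<times> nat) set set"

definition twin_pairing :: "nat \<Rightarrow> (nat \<Rightarrow> nat) \<Rightarrow> bool" where
  "twin_pairing p \<tau> \<longleftrightarrow> (\<forall>i\<in>{1..p}. \<tau> i \<in> {1..p} \<and> \<tau> (\<tau> i) = i \<and> \<tau> i \<noteq> i)"

definition tau_edge :: "(nat \<Rightarrow> nat) \<Rightarrow> nat \<times> nat \<Rightarrow> nat \<times> nat" where
  "tau_edge \<tau> e = (min (\<tau> (fst e)) (\<tau> (snd e)), max (\<tau> (fst e)) (\<tau> (snd e)))"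

definition F_V :: "nat \<Rightarrow> (nat \<times> nat) set" where
  "F_V p = {(i,j). i \<in> {1..p} \<and> j \<in> {1..p} \<and> i < j}"

definition F_L :: "nat \<Rightarrow> (nat \<Rightarrow> nat) \<Rightarrow> (nat \<times> nat) set" where
  "F_L p \<tau> = {(i,j) \<in> F_V p. i < \<tau> j}"

definition F_R :: "nat \<Rightarrow> (nat \<Rightarrow> nat) \<Rightarrow> (nat \<times> nat) set" where
  "F_R p \<tau> = {(i,j) \<in> F_V p. i > \<tau> j}"

definition vclasses :: "cgraph \<Rightarrow> nat set set" where "vclasses G = fst G"
definition eclasses :: "cgraph \<Rightarrow> (nat \<times> nat) set set" where "eclasses G = snd G"

definition edges :: "cgraph \<Rightarrow> (nat \<times> nat) set" where "edges G = \<Union> (eclasses G)"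

definition is_partition_of :: "'a set set \<Rightarrow> 'a set \<Rightarrow> bool" where
  "is_partition_of P S \<longleftrightarrow> \<Union> P = S \<and> {} \<notin> P \<and>
     (\<forall>C\<in>P. \<forall>D\<in>P. C \<noteq> D \<longrightarrow> C \<inter> D = {})"

definition is_pdCG :: "nat \<Rightarrow> (nat \<Rightarrow> nat) \<Rightarrow> cgraph \<Rightarrow> bool" where
  "is_pdCG p \<tau> G \<longleftrightarrow>
     is_partition_of (vclasses G) {1..p} \<and>
     edges G \<subseteq> F_V p \<and>
     is_partition_of (eclasses G) (edges G) \<and>
     (\<forall>C\<in>vclasses G. (\<exists>i. C = {i}) \<or> (\<exists>i. C = {i, \<tau> i})) \<and>
     (\<forall>C\<in>eclasses G. (\<exists>e. C = {e}) \<or> (\<exists>e. C = {e, tau_edge \<tau> e} \<and> e \<noteq> tau_edge \<tau> e))"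

text \<open>Quadruplet components (E, LL, EE) of the representation (V, E, LL, EE).\<close>
definition LL :: "nat \<Rightarrow> cgraph \<Rightarrow> nat set" where
  "LL q G = {i \<in> {1..q}. {i} \<in> vclasses G}"

definition EE :: "nat \<Rightarrow> (nat \<Rightarrow> nat) \<Rightarrow> cgraph \<Rightarrow> (nat \<times> nat) set" where
  "EE p \<tau> G = {e \<in> (edges G \<inter> F_L p \<tau>) \<inter> tau_edge \<tau> ` (edges G \<inter> F_R p \<tau>).
                  {e} \<in> eclasses G}"

text \<open>Model inclusion order (combinatorial characterisation of P(H) \<subseteq> P(G)).\<close>
definition s_le :: "cgraph \<Rightarrow> cgraph \<Rightarrow> bool" where
  "s_le H G \<longleftrightarrow> edges H \<subseteq> edges G \<and>
     (\<forall>C\<in>vclasses H. \<exists>S\<subseteq>vclasses G. C = \<Union> S) \<and>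
     (\<forall>C\<in>eclasses H. \<exists>S\<subseteq>eclasses G. C = \<Union> S)"

definition s_less :: "cgraph \<Rightarrow> cgraph \<Rightarrow> bool" where
  "s_less H G \<longleftrightarrow> s_le H G \<and> H \<noteq> G"

definition covered_s :: "nat \<Rightarrow> (nat \<Rightarrow> nat) \<Rightarrow> cgraph \<Rightarrow> cgraph \<Rightarrow> bool" where
  "covered_s p \<tau> H G \<longleftrightarrow> s_less H G \<and>
     \<not> (\<exists>F. is_pdCG p \<tau> F \<and> s_less H F \<and> s_less F G)"

definition t_le :: "nat \<Rightarrow> nat \<Rightarrow> (nat \<Rightarrow> nat) \<Rightarrow> cgraph \<Rightarrow> cgraph \<Rightarrow> bool" where
  "t_le p q \<tau> H G \<longleftrightarrow> edges H \<subseteq> edges G \<and> LL q H \<subseteq> LL q G \<and> EE p \<tau> H \<subseteq> EE p \<tau> G"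

definition meet_s :: "nat \<Rightarrow> (nat \<Rightarrow> nat) \<Rightarrow> cgraph \<Rightarrow> cgraph \<Rightarrow> cgraph" where
  "meet_s p \<tau> G H = (THE M. is_pdCG p \<tau> M \<and> s_le M G \<and> s_le M H \<and>
      (\<forall>K. is_pdCG p \<tau> K \<and> s_le K G \<and> s_le K H \<longrightarrow> s_le K M))"

definition meet_t :: "nat \<Rightarrow> nat \<Rightarrow> (nat \<Rightarrow> nat) \<Rightarrow> cgraph \<Rightarrow> cgraph \<Rightarrow> cgraph" where
  "meet_t p q \<tau> G H = (THE M. is_pdCG p \<tau> M \<and> edges M = edges G \<inter> edges H \<and>
      LL q M = LL q G \<inter> LL q H \<and> EE p \<tau> M = EE p \<tau> G \<inter> EE p \<tau> H)"

end

theory Submission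
  imports Defs
begin


definition AV :: "cgraph \<Rightarrow> nat set" where "AV K = {i. {i} \<in> vclasses K}"
definition AE :: "cgraph \<Rightarrow> (nat\<times>nat) set" where "AE K = {e. {e} \<in> eclasses K}"
definition PA :: "(nat \<Rightarrow> nat) \<Rightarrow> cgraph \<Rightarrow> (nat\<times>nat) set" where
  "PA \<tau> K = {e \<in> AE K. tau_edge \<tau> e \<in> edges K \<and> tau_edge \<tau> e \<noteq> e}"
definition mk :: "nat \<Rightarrow> (nat \<Rightarrow> nat) \<Rightarrow> (nat\<times>nat) set \<Rightarrow> nat set \<Rightarrow> (nat\<times>nat) set \<Rightarrow> cgraph" where
  "mk p \<tau> E V A = ({{i}|i. i \<in> V} \<union> {{i, \<tau> i}|i. i \<in> {1..p} - V},
                   {{e}|e. e \<in> A} \<union> {{e, tau_edge \<tau> e}|e. e \<in> E - A})"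
definition okT :: "nat \<Rightarrow> (nat \<Rightarrow> nat) \<Rightarrow> (nat\<times>nat) set \<Rightarrow> nat set \<Rightarrow> (nat\<times>nat) set \<Rightarrow> bool" where
  "okT p \<tau> E V A \<longleftrightarrow> V \<subseteq> {1..p} \<and> (\<forall>i\<in>V. \<tau> i \<in> V) \<and> A \<subseteq> E \<and> E \<subseteq> F_V p \<and>
     (\<forall>e\<in>E - A. tau_edge \<tau> e \<in> E - A \<and> tau_edge \<tau> e \<noteq> e)"

locale pdl =
  fixes p q :: nat and \<tau> :: "nat \<Rightarrow> nat"
  assumes tau: "twin_pairing p \<tau>" and LR: "\<tau> ` {1..q} = {q+1..p}"
begin

abbreviation T where "T \<equiv> tau_edge \<tau>"

lemma tauV: "i \<in> {1..p} \<Longrightarrow> \<tau> i \<in> {1..p} \<and> \<tau> (\<tau> i) = i \<and> \<tau> i \<noteq> i"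
  using tau unfolding twin_pairing_def by blast

lemma LRside: assumes "i \<in> {1..p}" shows "i \<le> q \<longleftrightarrow> q < \<tau> i"
proof
  assume "i \<le> q" then have "i \<in> {1..q}" using assms by auto
  then have "\<tau> i \<in> {q+1..p}" using LR by blast
  then show "q < \<tau> i" by auto
next
  assume h: "q < \<tau> i"
  show "i \<le> q"
  proof (rule ccontr)
    assume "\<not> i \<le> q"
    then have "i \<in> {q+1..p}" using assms by auto
    then obtain k where k: "k \<in> {1..q}" "i = \<tau> k" using LR by blast
    have "\<tau> k \<in> {q+1..p}" using k LR by blast
    then have "k \<in> {1..p}" using k by auto
    then have "\<tau> i = k" using k tauV by auto
    then show False using h k by auto
  qed
qed

lemma T_FV: assumes "e \<in> F_V p" shows "T e \<in> F_V p \<and> T (T e) = e"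
proof -
  obtain i j where e: "e = (i,j)" "i \<in> {1..p}" "j \<in> {1..p}" "i < j" using assms unfolding F_V_def by auto
  have d: "\<tau> i \<noteq> \<tau> j" using e tauV by (metis less_irrefl)
  have a: "\<tau> i \<in> {1..p}" "\<tau> j \<in> {1..p}" "\<tau> (\<tau> i) = i" "\<tau> (\<tau> j) = j" using e tauV by auto
  show ?thesis
  proof (cases "\<tau> i < \<tau> j")
    case True then show ?thesis using e a unfolding tau_edge_def F_V_def by auto
  next
    case False then have "\<tau> j < \<tau> i" using d by auto
    then show ?thesis using e a unfolding tau_edge_def F_V_def by (auto simp: min_def max_def)
  qed
qed

lemma FL_sub: "F_L p \<tau> \<subseteq> F_V p" "F_R p \<tau> \<subseteq> F_V p" unfolding F_L_def F_R_def by auto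

lemma FL_nfix: assumes "e \<in> F_L p \<tau>" shows "T e \<noteq> e"
proof
  assume h: "T e = e"
  obtain i j where e: "e = (i,j)" "i \<in> {1..p}" "j \<in> {1..p}" "i < j" "i < \<tau> j"
    using assms unfolding F_L_def F_V_def by auto
  have "min (\<tau> i) (\<tau> j) = i" "max (\<tau> i) (\<tau> j) = j" using h e unfolding tau_edge_def by auto
  then have "\<tau> i = i \<or> \<tau> j = i" by (metis min_def)
  then have "\<tau> j = i" using e tauV by blast
  then show False using e by auto
qed

lemma FLR: assumes "e \<in> F_V p" "T e \<noteq> e"
  shows "(e \<in> F_L p \<tau> \<and> T e \<in> F_R p \<tau>) \<or> (e \<in> F_R p \<tau> \<and> T e \<in> F_L p \<tau>)"
proof -
  obtain i j where e: "e = (i,j)" "i \<in> {1..p}" "j \<in> {1..p}" "i < j" using assms unfolding F_V_def by auto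
  have a: "\<tau> i \<in> {1..p}" "\<tau> j \<in> {1..p}" "\<tau> (\<tau> i) = i" "\<tau> (\<tau> j) = j" "\<tau> i \<noteq> i" "\<tau> j \<noteq> j" using e tauV by auto
  have d: "\<tau> i \<noteq> \<tau> j" using a e by (metis less_irrefl)
  have si: "i \<le> q \<longleftrightarrow> q < \<tau> i" and sj: "j \<le> q \<longleftrightarrow> q < \<tau> j" using LRside e by auto
  have TF: "T e \<in> F_V p" using T_FV assms by auto
  have ne: "i \<noteq> \<tau> j"
  proof
    assume "i = \<tau> j" then have "\<tau> i = j" using a by auto
    then have "T e = e" using e \<open>i = \<tau> j\<close> unfolding tau_edge_def by auto
    then show False using assms by auto
  qed
  show ?thesis
  proof (cases "\<tau> i < \<tau> j")
    case True
    then have Te: "T e = (\<tau> i, \<tau> j)" using e unfolding tau_edge_def by auto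
    show ?thesis using Te e a si sj ne TF True unfolding F_L_def F_R_def F_V_def by auto
  next
    case False then have lt: "\<tau> j < \<tau> i" using d by auto
    then have Te: "T e = (\<tau> j, \<tau> i)" using e unfolding tau_edge_def by auto
    show ?thesis using Te e a si sj ne TF lt unfolding F_L_def F_R_def F_V_def by auto
  qed
qed

end

context pdl begin

lemma mem_Timg: assumes "X \<subseteq> F_V p" "e \<in> F_V p" shows "e \<in> T ` X \<longleftrightarrow> T e \<in> X"
  using assms T_FV by (metis image_eqI imageE subsetD)

lemma part_mem: "is_partition_of P S \<Longrightarrow> x \<in> S \<Longrightarrow> \<exists>C\<in>P. x \<in> C"
  unfolding is_partition_of_def by blast
lemma part_sub: "is_partition_of P S \<Longrightarrow> C \<in> P \<Longrightarrow> C \<subseteq> S"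
  unfolding is_partition_of_def by blast
lemma part_disj: "is_partition_of P S \<Longrightarrow> C \<in> P \<Longrightarrow> D \<in> P \<Longrightarrow> C \<inter> D \<noteq> {} \<Longrightarrow> C = D"
  unfolding is_partition_of_def by blast

lemma pd_vpart: assumes "is_pdCG p \<tau> K"
  shows "is_partition_of (vclasses K) {1..p}" "\<forall>C\<in>vclasses K. (\<exists>i. C = {i}) \<or> (\<exists>i. C = {i, \<tau> i})"
    "edges K \<subseteq> F_V p" "is_partition_of (eclasses K) (edges K)"
    "\<forall>C\<in>eclasses K. (\<exists>e. C = {e}) \<or> (\<exists>e. C = {e, T e} \<and> e \<noteq> T e)"
  using assms unfolding is_pdCG_def by auto

lemma K1: assumes "is_pdCG p \<tau> K" "i \<in> AV K" shows "i \<in> {1..p}" "\<tau> i \<in> AV K"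
proof -
  note P = pd_vpart[OF assms(1)]
  have ci: "{i} \<in> vclasses K" using assms(2) unfolding AV_def by auto
  then show iV: "i \<in> {1..p}" using part_sub[OF P(1)] by blast
  have tV: "\<tau> i \<in> {1..p}" "\<tau> (\<tau> i) = i" "\<tau> i \<noteq> i" using tauV[OF iV] by auto
  then obtain C where C: "C \<in> vclasses K" "\<tau> i \<in> C" using part_mem[OF P(1)] by blast
  have CV: "C \<subseteq> {1..p}" using C part_sub[OF P(1)] by blast
  from P(2) C(1) consider j where "C = {j}" | j where "C = {j, \<tau> j}" by blast
  then show "\<tau> i \<in> AV K"
  proof cases
    case 1 then show ?thesis using C unfolding AV_def by auto
  next
    case 2
    then have jV: "j \<in> {1..p}" using CV by auto
    have tj: "\<tau> (\<tau> j) = j" using tauV[OF jV] by blast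
    have "\<tau> i = j \<or> \<tau> i = \<tau> j" using 2 C(2) by auto
    then have "C = {i, \<tau> i}"
    proof (elim disjE)
      assume h: "\<tau> i = j" then have "\<tau> j = i" using tV(2) by simp
      then show ?thesis using 2 h by auto
    next
      assume h: "\<tau> i = \<tau> j" then have "j = i" using tV(2) tj by metis
      then show ?thesis using 2 by auto
    qed
    then have "C \<noteq> {i}" "C \<inter> {i} \<noteq> {}" using tV by auto
    then show ?thesis using part_disj[OF P(1)] C(1) ci by blast
  qed
qed

lemma K2: assumes "is_pdCG p \<tau> K" shows "AE K \<subseteq> edges K" "edges K \<subseteq> F_V p"
  using assms unfolding is_pdCG_def AE_def edges_def by auto

lemma K3: assumes "is_pdCG p \<tau> K" "e \<in> edges K" "e \<notin> AE K"
  shows "T e \<in> edges K" "T e \<notin> AE K" "T e \<noteq> e"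
proof -
  note P = pd_vpart[OF assms(1)]
  obtain C where C: "C \<in> eclasses K" "e \<in> C" using assms(2) unfolding edges_def by auto
  have CE: "C \<subseteq> edges K" using C unfolding edges_def by auto
  from P(5) C(1) consider e' where "C = {e'}" | e' where "C = {e', T e'}" "e' \<noteq> T e'" by blast
  then have X: "C = {e, T e} \<and> e \<noteq> T e"
  proof cases
    case 1 then show ?thesis using C assms(3) unfolding AE_def by auto
  next
    case 2
    have "e' \<in> F_V p" using 2 CE P(3) by auto
    then have "T (T e') = e'" using T_FV by auto
    then show ?thesis using 2 C(2) by auto
  qed
  then show "T e \<in> edges K" "T e \<noteq> e" using CE by auto
  show "T e \<notin> AE K"
  proof
    assume "T e \<in> AE K"
    then have "{T e} \<in> eclasses K" unfolding AE_def by auto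
    moreover have "{T e} \<noteq> C" "{T e} \<inter> C \<noteq> {}" using X by auto
    ultimately show False using part_disj[OF P(4)] C(1) by blast
  qed
qed

lemma K3': assumes "is_pdCG p \<tau> K" "e \<in> AE K" "T e \<in> edges K" shows "T e \<in> AE K"
proof (rule ccontr)
  assume "T e \<notin> AE K"
  then have "T (T e) \<notin> AE K" using K3 assms by blast
  moreover have "T (T e) = e" using T_FV K2[OF assms(1)] assms(2) by blast
  ultimately show False using assms by auto
qed

lemma K4: assumes "is_pdCG p \<tau> K" shows "K = mk p \<tau> (edges K) (AV K) (AE K)"
proof -
  note P = pd_vpart[OF assms(1)]
  have v: "vclasses K = {{i}|i. i \<in> AV K} \<union> {{i, \<tau> i}|i. i \<in> {1..p} - AV K}"
  proof (rule set_eqI, rule iffI)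
    fix C assume C: "C \<in> vclasses K"
    have CV: "C \<subseteq> {1..p}" using C part_sub[OF P(1)] by blast
    from P(2) C consider i where "C = {i}" | i where "C = {i, \<tau> i}" by blast
    then show "C \<in> {{i}|i. i \<in> AV K} \<union> {{i, \<tau> i}|i. i \<in> {1..p} - AV K}"
    proof cases
      case 1 then show ?thesis using C unfolding AV_def by blast
    next
      case 2
      have iV: "i \<in> {1..p}" using 2 CV by blast
      have "i \<notin> AV K"
      proof
        assume "i \<in> AV K"
        then have ci: "{i} \<in> vclasses K" unfolding AV_def by blast
        have "\<tau> i \<noteq> i" using tauV[OF iV] by blast
        moreover have "\<tau> i \<in> C" using 2 by blast
        ultimately have "{i} \<noteq> C" by blast
        moreover have "{i} \<inter> C \<noteq> {}" using 2 by blast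
        ultimately show False using part_disj[OF P(1)] C ci by blast
      qed
      then show ?thesis using 2 iV by blast
    qed
  next
    fix C assume "C \<in> {{i}|i. i \<in> AV K} \<union> {{i, \<tau> i}|i. i \<in> {1..p} - AV K}"
    then consider i where "C = {i}" "i \<in> AV K" | i where "C = {i, \<tau> i}" "i \<in> {1..p}" "i \<notin> AV K" by blast
    then show "C \<in> vclasses K"
    proof cases
      case 1 then show ?thesis unfolding AV_def by blast
    next
      case 2
      obtain D where D: "D \<in> vclasses K" "i \<in> D" using 2 part_mem[OF P(1)] by blast
      have DV: "D \<subseteq> {1..p}" using D part_sub[OF P(1)] by blast
      from P(2) D(1) consider j where "D = {j}" | j where "D = {j, \<tau> j}" by blast
      then show ?thesis
      proof cases
        case 1 then show ?thesis using D 2 unfolding AV_def by blast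
      next
        case 3: 2
        have "j \<in> {1..p}" using 3 DV by blast
        then have tj: "\<tau> (\<tau> j) = j" using tauV[of j] by blast
        have ti: "\<tau> (\<tau> i) = i" using tauV[of i] 2 by blast
        have "i = j \<or> i = \<tau> j" using 3 D(2) by blast
        then have "D = C"
        proof (elim disjE)
          assume h: "i = j" then show ?thesis using 3 2 by blast
        next
          assume h: "i = \<tau> j" then have "\<tau> i = j" using tj by simp
          then show ?thesis using 3 2 h by (simp add: insert_commute)
        qed
        then show ?thesis using D by blast
      qed
    qed
  qed
  have e: "eclasses K = {{e}|e. e \<in> AE K} \<union> {{e, T e}|e. e \<in> edges K - AE K}"
  proof (rule set_eqI, rule iffI)
    fix C assume C: "C \<in> eclasses K"
    have CE: "C \<subseteq> edges K" using C unfolding edges_def by blast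
    from P(5) C consider e where "C = {e}" | e where "C = {e, T e}" "e \<noteq> T e" by blast
    then show "C \<in> {{e}|e. e \<in> AE K} \<union> {{e, T e}|e. e \<in> edges K - AE K}"
    proof cases
      case 1 then show ?thesis using C unfolding AE_def by blast
    next
      case 2
      have "e \<notin> AE K"
      proof
        assume "e \<in> AE K"
        then have ce: "{e} \<in> eclasses K" unfolding AE_def by blast
        have "T e \<in> C" using 2 by blast
        then have "{e} \<noteq> C" using 2(2) by (metis singletonD)
        moreover have "{e} \<inter> C \<noteq> {}" using 2 by blast
        ultimately show False using part_disj[OF P(4)] C ce by blast
      qed
      then show ?thesis using 2 CE by blast
    qed
  next
    fix C assume "C \<in> {{e}|e. e \<in> AE K} \<union> {{e, T e}|e. e \<in> edges K - AE K}"
    then consider e where "C = {e}" "e \<in> AE K" | e where "C = {e, T e}" "e \<in> edges K" "e \<notin> AE K" by blast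
    then show "C \<in> eclasses K"
    proof cases
      case 1 then show ?thesis unfolding AE_def by blast
    next
      case 2
      obtain D where D: "D \<in> eclasses K" "e \<in> D" using 2 unfolding edges_def by blast
      have DE: "D \<subseteq> edges K" using D unfolding edges_def by blast
      from P(5) D(1) consider e' where "D = {e'}" | e' where "D = {e', T e'}" "e' \<noteq> T e'" by blast
      then show ?thesis
      proof cases
        case 1 then show ?thesis using D 2 unfolding AE_def by blast
      next
        case 3: 2
        have "e' \<in> F_V p" using 3 DE P(3) by blast
        then have "T (T e') = e'" using T_FV by blast
        have "e = e' \<or> e = T e'" using 3 D(2) by blast
        then have "D = C"
        proof (elim disjE)
          assume "e = e'" then show ?thesis using 3 2 by simp
        next
          assume h: "e = T e'" then have "T e = e'" using \<open>T (T e') = e'\<close> by simp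
          then show ?thesis using 3 2 h by (simp add: insert_commute)
        qed
        then show ?thesis using D by blast
      qed
    qed
  qed
  have "K = (vclasses K, eclasses K)" unfolding vclasses_def eclasses_def by simp
  also have "\<dots> = mk p \<tau> (edges K) (AV K) (AE K)" unfolding mk_def by (simp only: v e)
  finally show ?thesis .
qed

lemma pd_eq: assumes "is_pdCG p \<tau> K" "is_pdCG p \<tau> K'" "edges K = edges K'" "AV K = AV K'" "AE K = AE K'"
  shows "K = K'"
  using K4[OF assms(1)] K4[OF assms(2)] assms(3-5) by metis

end

context pdl begin

lemma vcl_form: assumes "is_pdCG p \<tau> K" shows "vclasses K = {{i}|i. i \<in> AV K} \<union> {{i, \<tau> i}|i. i \<in> {1..p} - AV K}"
proof -
  have "vclasses K = vclasses (mk p \<tau> (edges K) (AV K) (AE K))" by (rule arg_cong[OF K4[OF assms]])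
  also have "\<dots> = {{i}|i. i \<in> AV K} \<union> {{i, \<tau> i}|i. i \<in> {1..p} - AV K}" by (simp only: mk_def vclasses_def fst_conv)
  finally show ?thesis .
qed
lemma ecl_form: assumes "is_pdCG p \<tau> K" shows "eclasses K = {{e}|e. e \<in> AE K} \<union> {{e, T e}|e. e \<in> edges K - AE K}"
proof -
  have "eclasses K = eclasses (mk p \<tau> (edges K) (AV K) (AE K))" by (rule arg_cong[OF K4[OF assms]])
  also have "\<dots> = {{e}|e. e \<in> AE K} \<union> {{e, T e}|e. e \<in> edges K - AE K}" by (simp only: mk_def eclasses_def snd_conv)
  finally show ?thesis .
qed

lemma pd_ok: assumes "is_pdCG p \<tau> K" shows "okT p \<tau> (edges K) (AV K) (AE K)"
  unfolding okT_def
proof (intro conjI ballI)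
  show "AV K \<subseteq> {1..p}" using K1(1)[OF assms] by blast
  show "\<And>i. i \<in> AV K \<Longrightarrow> \<tau> i \<in> AV K" using K1(2)[OF assms] by blast
  show "AE K \<subseteq> edges K" "edges K \<subseteq> F_V p" using K2[OF assms] by blast+
  fix e assume "e \<in> edges K - AE K"
  then show "T e \<in> edges K - AE K" "T e \<noteq> e" using K3[OF assms, of e] by blast+
qed

context
  fixes E :: "(nat\<times>nat) set" and V :: "nat set" and A :: "(nat\<times>nat) set"
  assumes ok: "okT p \<tau> E V A"
begin

lemma okD: "V \<subseteq> {1..p}" "\<And>i. i \<in> V \<Longrightarrow> \<tau> i \<in> V" "A \<subseteq> E" "E \<subseteq> F_V p"
  "\<And>e. e \<in> E \<Longrightarrow> e \<notin> A \<Longrightarrow> T e \<in> E \<and> T e \<notin> A \<and> T e \<noteq> e"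
proof -
  note o = ok[unfolded okT_def]
  show "V \<subseteq> {1..p}" using o by (rule conjunct1)
  show "\<And>i. i \<in> V \<Longrightarrow> \<tau> i \<in> V" using o[THEN conjunct2, THEN conjunct1] by (rule bspec)
  show "A \<subseteq> E" using o[THEN conjunct2, THEN conjunct2, THEN conjunct1] .
  show "E \<subseteq> F_V p" using o[THEN conjunct2, THEN conjunct2, THEN conjunct2, THEN conjunct1] .
  fix e assume "e \<in> E" "e \<notin> A"
  then have "e \<in> E - A" by (rule DiffI)
  then have "T e \<in> E - A \<and> T e \<noteq> e" using o[THEN conjunct2, THEN conjunct2, THEN conjunct2, THEN conjunct2] by (rule bspec[rotated])
  then show "T e \<in> E \<and> T e \<notin> A \<and> T e \<noteq> e" by simp
qed

lemma mk_v: "vclasses (mk p \<tau> E V A) = {{i}|i. i \<in> V} \<union> {{i, \<tau> i}|i. i \<in> {1..p} - V}"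
  by (simp add: mk_def vclasses_def)
lemma mk_e: "eclasses (mk p \<tau> E V A) = {{e}|e. e \<in> A} \<union> {{e, T e}|e. e \<in> E - A}"
  by (simp add: mk_def eclasses_def)

lemma canon_v: assumes "C \<in> vclasses (mk p \<tau> E V A)" "x \<in> C"
  shows "C = (if x \<in> V then {x} else {x, \<tau> x})"
proof -
  from assms(1)[unfolded mk_v] consider i where "C = {i}" "i \<in> V" | i where "C = {i, \<tau> i}" "i \<in> {1..p}" "i \<notin> V" by blast
  then show ?thesis
  proof cases
    case 1 then have "x = i" using assms(2) by blast
    then show ?thesis using 1 by simp
  next
    case 2
    have ti: "\<tau> (\<tau> i) = i" using tauV[OF 2(2)] by blast
    have "x = i \<or> x = \<tau> i" using 2 assms(2) by blast
    then show ?thesis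
    proof (elim disjE)
      assume "x = i" then show ?thesis using 2 by simp
    next
      assume h: "x = \<tau> i"
      then have tx: "\<tau> x = i" using ti by simp
      have "x \<notin> V" using okD(2)[of x] tx 2(3) by blast
      then show ?thesis using 2(1) h tx by (simp add: insert_commute)
    qed
  qed
qed

lemma canon_e: assumes "C \<in> eclasses (mk p \<tau> E V A)" "x \<in> C"
  shows "C = (if x \<in> A then {x} else {x, T x})"
proof -
  from assms(1)[unfolded mk_e] consider e where "C = {e}" "e \<in> A" | e where "C = {e, T e}" "e \<in> E" "e \<notin> A" by blast
  then show ?thesis
  proof cases
    case 1 then have "x = e" using assms(2) by blast
    then show ?thesis using 1 by simp
  next
    case 2
    have "e \<in> F_V p" using okD(4) 2(2) by (rule subsetD)
    then have ti: "T (T e) = e" using T_FV by simp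
    have "x = e \<or> x = T e" using 2 assms(2) by simp
    then show ?thesis
    proof (elim disjE)
      assume "x = e" then show ?thesis using 2 by simp
    next
      assume h: "x = T e"
      then have tx: "T x = e" using ti by simp
      have "x \<notin> A" using okD(5)[OF 2(2,3)] h by simp
      then show ?thesis using 2(1) h tx by (simp add: insert_commute)
    qed
  qed
qed

lemma mk_AV: "AV (mk p \<tau> E V A) = V"
proof (rule set_eqI, rule iffI)
  fix i assume "i \<in> AV (mk p \<tau> E V A)"
  then have "{i} \<in> vclasses (mk p \<tau> E V A)" unfolding AV_def by simp
  from this[unfolded mk_v] consider j where "{i} = {j}" "j \<in> V" | j where "{i} = {j, \<tau> j}" "j \<in> {1..p}" by blast
  then show "i \<in> V"
  proof cases
    case 1 then show ?thesis by simp
  next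
    case 2
    then have "j = i" "\<tau> j = i" by (metis insertI1 singletonD, metis insertI1 insertI2 singletonD)
    then show ?thesis using tauV[OF 2(2)] by simp
  qed
next
  fix i assume "i \<in> V" then show "i \<in> AV (mk p \<tau> E V A)" unfolding AV_def mk_v by blast
qed

lemma mk_AE: "AE (mk p \<tau> E V A) = A"
proof (rule set_eqI, rule iffI)
  fix e assume "e \<in> AE (mk p \<tau> E V A)"
  then have "{e} \<in> eclasses (mk p \<tau> E V A)" unfolding AE_def by simp
  from this[unfolded mk_e] consider x where "{e} = {x}" "x \<in> A" | x where "{e} = {x, T x}" "x \<in> E" "x \<notin> A" by blast
  then show "e \<in> A"
  proof cases
    case 1 then show ?thesis by simp
  next
    case 2
    then have "x = e" "T x = e" by (metis insertI1 singletonD, metis insertI1 insertI2 singletonD)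
    moreover have "T x \<noteq> x" using okD(5)[OF 2(2,3)] by simp
    ultimately show ?thesis by simp
  qed
next
  fix e assume "e \<in> A" then show "e \<in> AE (mk p \<tau> E V A)" unfolding AE_def mk_e by blast
qed

lemma mk_edges: "edges (mk p \<tau> E V A) = E"
proof (rule set_eqI, rule iffI)
  fix e assume "e \<in> edges (mk p \<tau> E V A)"
  then obtain C where C: "C \<in> eclasses (mk p \<tau> E V A)" "e \<in> C" unfolding edges_def by blast
  from C(1)[unfolded mk_e] consider x where "C = {x}" "x \<in> A" | x where "C = {x, T x}" "x \<in> E" "x \<notin> A" by blast
  then show "e \<in> E"
  proof cases
    case 1 then show ?thesis using C okD(3) by blast
  next
    case 2 then have "T x \<in> E" using okD(5)[OF 2(2,3)] by simp
    then show ?thesis using 2 C by auto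
  qed
next
  fix e assume e: "e \<in> E"
  show "e \<in> edges (mk p \<tau> E V A)"
  proof (cases "e \<in> A")
    case True then have "{e} \<in> eclasses (mk p \<tau> E V A)" unfolding mk_e by blast
    then show ?thesis unfolding edges_def by blast
  next
    case False then have "{e, T e} \<in> eclasses (mk p \<tau> E V A)" unfolding mk_e using e by blast
    then show ?thesis unfolding edges_def by blast
  qed
qed

lemma mk_pd: "is_pdCG p \<tau> (mk p \<tau> E V A)"
proof -
  let ?M = "mk p \<tau> E V A"
  have p1: "is_partition_of (vclasses ?M) {1..p}"
    unfolding is_partition_of_def
  proof (intro conjI ballI impI)
    show "\<Union> (vclasses ?M) = {1..p}"
    proof (rule set_eqI, rule iffI)
      fix x assume "x \<in> \<Union> (vclasses ?M)"
      then obtain C where C: "C \<in> vclasses ?M" "x \<in> C" by blast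
      from C(1)[unfolded mk_v] consider i where "C = {i}" "i \<in> V" | i where "C = {i, \<tau> i}" "i \<in> {1..p}" "i \<notin> V" by blast
      then show "x \<in> {1..p}"
      proof cases
        case 1 then show ?thesis using C okD(1) by blast
      next
        case 2 then have "\<tau> i \<in> {1..p}" using tauV[OF 2(2)] by simp
        then show ?thesis using 2 C by blast
      qed
    next
      fix x assume x: "x \<in> {1..p}"
      show "x \<in> \<Union> (vclasses ?M)"
      proof (cases "x \<in> V")
        case True then have "{x} \<in> vclasses ?M" unfolding mk_v by blast
        then show ?thesis by blast
      next
        case False then have "{x, \<tau> x} \<in> vclasses ?M" unfolding mk_v using x by blast
        then show ?thesis by blast
      qed
    qed
    show "{} \<notin> vclasses ?M" unfolding mk_v by blast
    fix C D assume "C \<in> vclasses ?M" "D \<in> vclasses ?M" "C \<noteq> D"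
    then show "C \<inter> D = {}"
    proof -
      assume a: "C \<in> vclasses ?M" "D \<in> vclasses ?M" "C \<noteq> D"
      show "C \<inter> D = {}"
      proof (rule ccontr)
        assume "C \<inter> D \<noteq> {}" then obtain x where x: "x \<in> C" "x \<in> D" by blast
        have "C = (if x \<in> V then {x} else {x, \<tau> x})" by (rule canon_v[OF a(1) x(1)])
        moreover have "D = (if x \<in> V then {x} else {x, \<tau> x})" by (rule canon_v[OF a(2) x(2)])
        ultimately have "C = D" by simp
        then show False using a(3) by simp
      qed
    qed
  qed
  have p2: "is_partition_of (eclasses ?M) (edges ?M)"
    unfolding is_partition_of_def
  proof (intro conjI ballI impI)
    show "\<Union> (eclasses ?M) = edges ?M" unfolding edges_def by simp
    show "{} \<notin> eclasses ?M" unfolding mk_e by auto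
    fix C D assume "C \<in> eclasses ?M" "D \<in> eclasses ?M" "C \<noteq> D"
    then show "C \<inter> D = {}"
    proof -
      assume a: "C \<in> eclasses ?M" "D \<in> eclasses ?M" "C \<noteq> D"
      show "C \<inter> D = {}"
      proof (rule ccontr)
        assume "C \<inter> D \<noteq> {}" then obtain x where x: "x \<in> C" "x \<in> D" by blast
        have "C = (if x \<in> A then {x} else {x, T x})" by (rule canon_e[OF a(1) x(1)])
        moreover have "D = (if x \<in> A then {x} else {x, T x})" by (rule canon_e[OF a(2) x(2)])
        ultimately have "C = D" by simp
        then show False using a(3) by simp
      qed
    qed
  qed
  have p3: "\<forall>C\<in>vclasses ?M. (\<exists>i. C = {i}) \<or> (\<exists>i. C = {i, \<tau> i})" unfolding mk_v by blast
  have p4: "\<forall>C\<in>eclasses ?M. (\<exists>e. C = {e}) \<or> (\<exists>e. C = {e, T e} \<and> e \<noteq> T e)"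
  proof
    fix C assume "C \<in> eclasses ?M"
    from this[unfolded mk_e] consider x where "C = {x}" | x where "C = {x, T x}" "x \<in> E" "x \<notin> A" by blast
    then show "(\<exists>e. C = {e}) \<or> (\<exists>e. C = {e, T e} \<and> e \<noteq> T e)"
    proof cases
      case 1 then show ?thesis by blast
    next
      case 2 then have "T x \<noteq> x" using okD(5)[OF 2(2,3)] by simp
      then have "C = {x, T x} \<and> x \<noteq> T x" using 2(1) by simp
      then show ?thesis by (intro disjI2 exI)
    qed
  qed
  have p5: "edges ?M \<subseteq> F_V p" using mk_edges okD(4) by simp
  show ?thesis unfolding is_pdCG_def using p1 p2 p3 p4 p5 by (intro conjI)
qed

end

lemma mk_all: assumes "okT p \<tau> E V A"
  shows "is_pdCG p \<tau> (mk p \<tau> E V A)" "edges (mk p \<tau> E V A) = E" "AV (mk p \<tau> E V A) = V" "AE (mk p \<tau> E V A) = A"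
  by (rule mk_pd[OF assms], rule mk_edges[OF assms], rule mk_AV[OF assms], rule mk_AE[OF assms])

end

context pdl begin

lemma s_le_iff: assumes H: "is_pdCG p \<tau> H" and G: "is_pdCG p \<tau> G"
  shows "s_le H G \<longleftrightarrow> edges H \<subseteq> edges G \<and> AV H \<subseteq> AV G \<and> AE H \<subseteq> AE G"
proof
  assume s: "s_le H G"
  have e: "edges H \<subseteq> edges G" using s unfolding s_le_def by simp
  have v: "AV H \<subseteq> AV G"
  proof
    fix i assume "i \<in> AV H"
    then have "{i} \<in> vclasses H" unfolding AV_def by simp
    then obtain S where S: "S \<subseteq> vclasses G" "{i} = \<Union> S" using s unfolding s_le_def by meson
    then obtain C where C: "C \<in> S" "i \<in> C" by (metis UnionE insertI1)
    have "C \<subseteq> {i}" using S(2) C(1) by (simp add: Union_upper)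
    then have "C = {i}" using C(2) by auto
    then show "i \<in> AV G" using C(1) S(1) unfolding AV_def by auto
  qed
  have a: "AE H \<subseteq> AE G"
  proof
    fix i assume "i \<in> AE H"
    then have "{i} \<in> eclasses H" unfolding AE_def by simp
    then obtain S where S: "S \<subseteq> eclasses G" "{i} = \<Union> S" using s unfolding s_le_def by meson
    then obtain C where C: "C \<in> S" "i \<in> C" by (metis UnionE insertI1)
    have "C \<subseteq> {i}" using S(2) C(1) by (simp add: Union_upper)
    then have "C = {i}" using C(2) by auto
    then show "i \<in> AE G" using C(1) S(1) unfolding AE_def by auto
  qed
  show "edges H \<subseteq> edges G \<and> AV H \<subseteq> AV G \<and> AE H \<subseteq> AE G" using e v a by simp
next
  assume "edges H \<subseteq> edges G \<and> AV H \<subseteq> AV G \<and> AE H \<subseteq> AE G"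
  then have e: "edges H \<subseteq> edges G" and v: "AV H \<subseteq> AV G" and a: "AE H \<subseteq> AE G" by auto
  have vv: "\<exists>S\<subseteq>vclasses G. C = \<Union> S" if C: "C \<in> vclasses H" for C
  proof -
    from C[unfolded vcl_form[OF H]] consider i where "C = {i}" "i \<in> AV H" | i where "C = {i, \<tau> i}" "i \<in> {1..p}" "i \<notin> AV H" by blast
    then show ?thesis
    proof cases
      case 1 then have "{i} \<in> vclasses G" using v unfolding AV_def by auto
      then show ?thesis using 1 by (intro exI[of _ "{{i}}"]) simp
    next
      case 2
      show ?thesis
      proof (cases "i \<in> AV G")
        case True
        then have "\<tau> i \<in> AV G" using K1(2)[OF G] by simp
        then have "{{i}, {\<tau> i}} \<subseteq> vclasses G" using True unfolding AV_def by simp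
        then show ?thesis using 2 by (intro exI[of _ "{{i}, {\<tau> i}}"]) auto
      next
        case False
        then have "{i, \<tau> i} \<in> vclasses G" unfolding vcl_form[OF G] using 2 by blast
        then show ?thesis using 2 by (intro exI[of _ "{{i, \<tau> i}}"]) simp
      qed
    qed
  qed
  have ee: "\<exists>S\<subseteq>eclasses G. C = \<Union> S" if C: "C \<in> eclasses H" for C
  proof -
    from C[unfolded ecl_form[OF H]] consider x where "C = {x}" "x \<in> AE H" | x where "C = {x, T x}" "x \<in> edges H" "x \<notin> AE H" by blast
    then show ?thesis
    proof cases
      case 1 then have "{x} \<in> eclasses G" using a unfolding AE_def by auto
      then show ?thesis using 1 by (intro exI[of _ "{{x}}"]) simp
    next
      case 2
      have tH: "T x \<in> edges H" using K3(1)[OF H 2(2,3)] .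
      then have tG: "T x \<in> edges G" using e by (rule subsetD[rotated])
      have xG: "x \<in> edges G" using e 2(2) by (rule subsetD)
      show ?thesis
      proof (cases "x \<in> AE G")
        case True
        then have "T x \<in> AE G" using K3'[OF G True tG] by simp
        then have "{{x}, {T x}} \<subseteq> eclasses G" using True unfolding AE_def by simp
        then show ?thesis using 2 by (intro exI[of _ "{{x}, {T x}}"]) auto
      next
        case False
        have "{x, T x} \<in> {{e, T e}|e. e \<in> edges G - AE G}" using False xG by (intro CollectI exI[of _ x]) simp
        then have "{x, T x} \<in> eclasses G" unfolding ecl_form[OF G] by (rule UnI2)
        then show ?thesis using 2 by (intro exI[of _ "{{x, T x}}"]) simp
      qed
    qed
  qed
  show "s_le H G" unfolding s_le_def
  proof (intro conjI ballI)
    show "edges H \<subseteq> edges G" by (rule e)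
  next
    fix C assume "C \<in> vclasses H" then show "\<exists>S\<subseteq>vclasses G. C = \<Union> S" by (rule vv)
  next
    fix C assume "C \<in> eclasses H" then show "\<exists>S\<subseteq>eclasses G. C = \<Union> S" by (rule ee)
  qed
qed

lemma s_antisym: assumes "is_pdCG p \<tau> H" "is_pdCG p \<tau> G" "s_le H G" "s_le G H" shows "H = G"
proof -
  have "edges H = edges G" "AV H = AV G" "AE H = AE G"
    using assms(3,4) unfolding s_le_iff[OF assms(1,2)] s_le_iff[OF assms(2,1)] by auto
  then show ?thesis using pd_eq[OF assms(1,2)] by simp
qed

lemma EE_mem: "e \<in> EE p \<tau> K \<longleftrightarrow> e \<in> edges K \<and> e \<in> F_L p \<tau> \<and> e \<in> T ` (edges K \<inter> F_R p \<tau>) \<and> e \<in> AE K"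
  unfolding EE_def AE_def by simp

lemma LL_mem: "i \<in> LL q K \<longleftrightarrow> i \<in> {1..q} \<and> i \<in> AV K"
  unfolding LL_def AV_def by simp



lemma t_le_iff: assumes H: "is_pdCG p \<tau> H" and G: "is_pdCG p \<tau> G"
  shows "t_le p q \<tau> H G \<longleftrightarrow> edges H \<subseteq> edges G \<and> AV H \<subseteq> AV G \<and> PA \<tau> H \<subseteq> PA \<tau> G"
proof
  assume t: "t_le p q \<tau> H G"
  have e: "edges H \<subseteq> edges G" and l: "LL q H \<subseteq> LL q G" and ee: "EE p \<tau> H \<subseteq> EE p \<tau> G"
    using t unfolding t_le_def by auto
  have v: "AV H \<subseteq> AV G"
  proof
    fix i assume i: "i \<in> AV H"
    have iV: "i \<in> {1..p}" using K1(1)[OF H i] .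
    show "i \<in> AV G"
    proof (cases "i \<le> q")
      case True
      then have "i \<in> LL q H" using i iV unfolding LL_mem by simp
      then have "i \<in> LL q G" using l by (rule subsetD[rotated])
      then show ?thesis unfolding LL_mem by simp
    next
      case False
      then have tq: "\<tau> i \<le> q" using LRside[OF iV] by simp
      have tV: "\<tau> i \<in> {1..p}" "\<tau> (\<tau> i) = i" using tauV[OF iV] by auto
      have "\<tau> i \<in> AV H" using K1(2)[OF H i] .
      then have "\<tau> i \<in> LL q H" using tq tV unfolding LL_mem by simp
      then have "\<tau> i \<in> LL q G" using l by (rule subsetD[rotated])
      then have "\<tau> i \<in> AV G" unfolding LL_mem by simp
      then have "\<tau> (\<tau> i) \<in> AV G" using K1(2)[OF G] by simp
      then show ?thesis using tV by simp
    qed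
  qed
  have pa: "PA \<tau> H \<subseteq> PA \<tau> G"
  proof
    fix x assume "x \<in> PA \<tau> H"
    then have x: "x \<in> AE H" "T x \<in> edges H" "T x \<noteq> x" unfolding PA_def by auto
    have xE: "x \<in> edges H" using x(1) K2(1)[OF H] by (rule subsetD[rotated])
    have xV: "x \<in> F_V p" using xE K2(2)[OF H] by (rule subsetD[rotated])
    have TT: "T (T x) = x" using T_FV[OF xV] by simp
    have TV: "T x \<in> F_V p" using T_FV[OF xV] by simp
    have xG: "x \<in> edges G" "T x \<in> edges G" using e xE x(2) by auto
    from FLR[OF xV x(3)] have "x \<in> AE G"
    proof (elim disjE conjE)
      assume a: "x \<in> F_L p \<tau>" "T x \<in> F_R p \<tau>"
      have "x \<in> T ` (edges H \<inter> F_R p \<tau>)" using TT x(2) a(2) by (metis IntI image_eqI)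
      then have "x \<in> EE p \<tau> H" unfolding EE_mem using xE a x(1) by simp
      then have "x \<in> EE p \<tau> G" using ee by (rule subsetD[rotated])
      then show ?thesis unfolding EE_mem by simp
    next
      assume a: "x \<in> F_R p \<tau>" "T x \<in> F_L p \<tau>"
      have tA: "T x \<in> AE H" using K3'[OF H x(1) x(2)] .
      have "T x \<in> T ` (edges H \<inter> F_R p \<tau>)" using xE a(1) by simp
      then have "T x \<in> EE p \<tau> H" unfolding EE_mem using x(2) a tA by simp
      then have "T x \<in> EE p \<tau> G" using ee by (rule subsetD[rotated])
      then have "T x \<in> AE G" unfolding EE_mem by simp
      moreover have "T (T x) \<in> edges G" using TT xG by simp
      ultimately have "T (T x) \<in> AE G" by (rule K3'[OF G])
      then show ?thesis using TT by simp
    qed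
    then show "x \<in> PA \<tau> G" unfolding PA_def using xG x(3) by simp
  qed
  show "edges H \<subseteq> edges G \<and> AV H \<subseteq> AV G \<and> PA \<tau> H \<subseteq> PA \<tau> G" using e v pa by simp
next
  assume "edges H \<subseteq> edges G \<and> AV H \<subseteq> AV G \<and> PA \<tau> H \<subseteq> PA \<tau> G"
  then have e: "edges H \<subseteq> edges G" and v: "AV H \<subseteq> AV G" and pa: "PA \<tau> H \<subseteq> PA \<tau> G" by auto
  have l: "LL q H \<subseteq> LL q G" using v unfolding LL_def AV_def by auto
  have ee: "EE p \<tau> H \<subseteq> EE p \<tau> G"
  proof
    fix x assume "x \<in> EE p \<tau> H"
    then have x: "x \<in> edges H" "x \<in> F_L p \<tau>" "x \<in> T ` (edges H \<inter> F_R p \<tau>)" "x \<in> AE H" unfolding EE_mem by auto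
    obtain y where y: "y \<in> edges H" "y \<in> F_R p \<tau>" "x = T y" using x(3) by auto
    have yV: "y \<in> F_V p" using y(2) FL_sub(2) by (rule subsetD[rotated])
    have Tx: "T x = y" using y(3) T_FV[OF yV] by simp
    have "T x \<noteq> x" using FL_nfix[OF x(2)] .
    then have "x \<in> PA \<tau> H" unfolding PA_def using x(4) Tx y(1) by simp
    then have "x \<in> PA \<tau> G" using pa by (rule subsetD[rotated])
    then have xa: "x \<in> AE G" unfolding PA_def by simp
    have "x \<in> T ` (edges G \<inter> F_R p \<tau>)" using y e by auto
    then show "x \<in> EE p \<tau> G" unfolding EE_mem using xa x(1,2) e by auto
  qed
  show "t_le p q \<tau> H G" unfolding t_le_def using e l ee by simp
qed

lemma AE_PA: assumes K: "is_pdCG p \<tau> K"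
  shows "AE K = PA \<tau> K \<union> {e \<in> edges K. T e \<notin> edges K \<or> T e = e}"
proof (rule set_eqI, rule iffI)
  fix x assume x: "x \<in> AE K"
  then have "x \<in> edges K" using K2(1)[OF K] by (rule subsetD[rotated])
  then show "x \<in> PA \<tau> K \<union> {e \<in> edges K. T e \<notin> edges K \<or> T e = e}" using x unfolding PA_def by auto
next
  fix x assume "x \<in> PA \<tau> K \<union> {e \<in> edges K. T e \<notin> edges K \<or> T e = e}"
  then consider "x \<in> PA \<tau> K" | "x \<in> edges K" "T x \<notin> edges K \<or> T x = x" by auto
  then show "x \<in> AE K"
  proof cases
    case 1 then show ?thesis unfolding PA_def by simp
  next
    case 2 show ?thesis
    proof (rule ccontr)
      assume "x \<notin> AE K" then show False using K3[OF K 2(1)] 2(2) by simp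
    qed
  qed
qed

lemma t_antisym: assumes "is_pdCG p \<tau> H" "is_pdCG p \<tau> G" "t_le p q \<tau> H G" "t_le p q \<tau> G H" shows "H = G"
proof -
  have a: "edges H = edges G" "AV H = AV G" "PA \<tau> H = PA \<tau> G"
    using assms(3,4) unfolding t_le_iff[OF assms(1,2)] t_le_iff[OF assms(2,1)] by auto
  have "AE H = AE G" unfolding AE_PA[OF assms(1)] AE_PA[OF assms(2)] a ..
  then show ?thesis using pd_eq[OF assms(1,2)] a by simp
qed

end

context pdl begin

definition EM :: "cgraph \<Rightarrow> cgraph \<Rightarrow> (nat\<times>nat) set" where "EM F H = edges F \<inter> edges H"
definition AM :: "cgraph \<Rightarrow> cgraph \<Rightarrow> (nat\<times>nat) set" where
  "AM F H = (AE F \<inter> AE H) \<union> {e \<in> EM F H. T e \<notin> EM F H \<or> T e = e}"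
definition mt :: "cgraph \<Rightarrow> cgraph \<Rightarrow> cgraph" where
  "mt F H = mk p \<tau> (EM F H) (AV F \<inter> AV H) (AM F H)"

lemma mt_ok: assumes F: "is_pdCG p \<tau> F" and H: "is_pdCG p \<tau> H"
  shows "okT p \<tau> (EM F H) (AV F \<inter> AV H) (AM F H)"
  unfolding okT_def
proof (intro conjI ballI)
  show "AV F \<inter> AV H \<subseteq> {1..p}" using K1(1)[OF F] by auto
  fix i assume "i \<in> AV F \<inter> AV H" then show "\<tau> i \<in> AV F \<inter> AV H" using K1(2)[OF F] K1(2)[OF H] by simp
next
  show "AM F H \<subseteq> EM F H" unfolding AM_def EM_def using K2(1)[OF F] K2(1)[OF H] by auto
  show "EM F H \<subseteq> F_V p" unfolding EM_def using K2(2)[OF F] by auto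
next
  fix e assume "e \<in> EM F H - AM F H"
  then have e: "e \<in> edges F" "e \<in> edges H" "T e \<in> edges F" "T e \<in> edges H" "T e \<noteq> e" "\<not> (e \<in> AE F \<and> e \<in> AE H)"
    unfolding AM_def EM_def by auto
  have eV: "e \<in> F_V p" using e(1) K2(2)[OF F] by (rule subsetD[rotated])
  have TT: "T (T e) = e" using T_FV[OF eV] by simp
  have "T e \<notin> AE F \<or> T e \<notin> AE H"
  proof (rule ccontr)
    assume "\<not> (T e \<notin> AE F \<or> T e \<notin> AE H)"
    then have "T e \<in> AE F" "T e \<in> AE H" by auto
    then have "T (T e) \<in> AE F" "T (T e) \<in> AE H" using K3'[OF F, of "T e"] K3'[OF H, of "T e"] TT e by auto
    then show False using TT e(6) by simp
  qed
  then show "T e \<in> EM F H - AM F H" "T e \<noteq> e" unfolding AM_def EM_def using e TT by auto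
qed

lemma mt_all: assumes F: "is_pdCG p \<tau> F" and H: "is_pdCG p \<tau> H"
  shows "is_pdCG p \<tau> (mt F H)" "edges (mt F H) = edges F \<inter> edges H" "AV (mt F H) = AV F \<inter> AV H"
    "AE (mt F H) = AM F H"
  using mk_all[OF mt_ok[OF F H]] unfolding mt_def EM_def by auto

lemma Timg_FR: assumes "e \<in> F_V p" "X \<subseteq> F_V p" shows "e \<in> T ` (X \<inter> F_R p \<tau>) \<longleftrightarrow> T e \<in> X \<and> T e \<in> F_R p \<tau>"
proof -
  have "X \<inter> F_R p \<tau> \<subseteq> F_V p" using assms(2) by auto
  from mem_Timg[OF this assms(1)] show ?thesis by simp
qed

lemma mt_EE: assumes F: "is_pdCG p \<tau> F" and H: "is_pdCG p \<tau> H"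
  shows "EE p \<tau> (mt F H) = EE p \<tau> F \<inter> EE p \<tau> H"
proof (rule set_eqI)
  fix e
  note m = mt_all[OF F H]
  show "e \<in> EE p \<tau> (mt F H) \<longleftrightarrow> e \<in> EE p \<tau> F \<inter> EE p \<tau> H"
  proof (cases "e \<in> F_L p \<tau>")
    case False then show ?thesis unfolding Int_iff EE_mem by simp
  next
    case True
    have eV: "e \<in> F_V p" using True FL_sub(1) by (rule subsetD[rotated])
    have ne: "T e \<noteq> e" using FL_nfix[OF True] .
    have i1: "e \<in> T ` (edges (mt F H) \<inter> F_R p \<tau>) \<longleftrightarrow> T e \<in> edges (mt F H) \<and> T e \<in> F_R p \<tau>"
      by (rule Timg_FR[OF eV]) (use K2(2)[OF m(1)] in simp)
    have i2: "e \<in> T ` (edges F \<inter> F_R p \<tau>) \<longleftrightarrow> T e \<in> edges F \<and> T e \<in> F_R p \<tau>"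
      by (rule Timg_FR[OF eV]) (use K2(2)[OF F] in simp)
    have i3: "e \<in> T ` (edges H \<inter> F_R p \<tau>) \<longleftrightarrow> T e \<in> edges H \<and> T e \<in> F_R p \<tau>"
      by (rule Timg_FR[OF eV]) (use K2(2)[OF H] in simp)
    show ?thesis unfolding Int_iff EE_mem unfolding i1 i2 i3 unfolding m(2,4) AM_def EM_def using ne by auto
  qed
qed

lemma meet_t_eq: assumes F: "is_pdCG p \<tau> F" and H: "is_pdCG p \<tau> H"
  shows "meet_t p q \<tau> F H = mt F H"
  unfolding meet_t_def
proof (rule the_equality)
  note m = mt_all[OF F H]
  have ll: "LL q (mt F H) = LL q F \<inter> LL q H" by (rule set_eqI) (auto simp: LL_mem m(3))
  show "is_pdCG p \<tau> (mt F H) \<and> edges (mt F H) = edges F \<inter> edges H \<and>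
    LL q (mt F H) = LL q F \<inter> LL q H \<and> EE p \<tau> (mt F H) = EE p \<tau> F \<inter> EE p \<tau> H"
    using m(1,2) ll mt_EE[OF F H] by simp
  fix M assume M: "is_pdCG p \<tau> M \<and> edges M = edges F \<inter> edges H \<and>
    LL q M = LL q F \<inter> LL q H \<and> EE p \<tau> M = EE p \<tau> F \<inter> EE p \<tau> H"
  have "t_le p q \<tau> M (mt F H)" "t_le p q \<tau> (mt F H) M"
    unfolding t_le_def using M m(2) ll mt_EE[OF F H] by auto
  then show "M = mt F H" using t_antisym M m(1) by blast
qed

definition compat :: "cgraph \<Rightarrow> cgraph \<Rightarrow> bool" where
  "compat F H \<longleftrightarrow> (\<forall>e \<in> EM F H. (T e \<notin> EM F H \<or> T e = e) \<longrightarrow> e \<in> AE F \<and> e \<in> AE H)"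

lemma mt_le: assumes F: "is_pdCG p \<tau> F" and H: "is_pdCG p \<tau> H" and c: "compat F H"
  shows "s_le (mt F H) F" "s_le (mt F H) H"
proof -
  note m = mt_all[OF F H]
  have "AM F H \<subseteq> AE F" "AM F H \<subseteq> AE H" using c unfolding AM_def compat_def by auto
  then show "s_le (mt F H) F" "s_le (mt F H) H"
    unfolding s_le_iff[OF m(1) F] s_le_iff[OF m(1) H] m(2,3,4) by auto
qed

lemma mt_glb: assumes F: "is_pdCG p \<tau> F" and H: "is_pdCG p \<tau> H" and K: "is_pdCG p \<tau> K"
  and "s_le K F" "s_le K H" shows "s_le K (mt F H)"
proof -
  note m = mt_all[OF F H]
  have "edges K \<subseteq> edges F" "AV K \<subseteq> AV F" "AE K \<subseteq> AE F" using assms(4) unfolding s_le_iff[OF K F] by auto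
  moreover have "edges K \<subseteq> edges H" "AV K \<subseteq> AV H" "AE K \<subseteq> AE H" using assms(5) unfolding s_le_iff[OF K H] by auto
  ultimately show ?thesis unfolding s_le_iff[OF K m(1)] m(2,3,4) AM_def by auto
qed

lemma meet_s_eq: assumes F: "is_pdCG p \<tau> F" and H: "is_pdCG p \<tau> H" and c: "compat F H"
  shows "meet_s p \<tau> F H = mt F H"
  unfolding meet_s_def
proof (rule the_equality)
  note m = mt_all[OF F H]
  show "is_pdCG p \<tau> (mt F H) \<and> s_le (mt F H) F \<and> s_le (mt F H) H \<and>
    (\<forall>K. is_pdCG p \<tau> K \<and> s_le K F \<and> s_le K H \<longrightarrow> s_le K (mt F H))"
    using m(1) mt_le[OF F H c] mt_glb[OF F H] by blast
  fix M assume M: "is_pdCG p \<tau> M \<and> s_le M F \<and> s_le M H \<and>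
    (\<forall>K. is_pdCG p \<tau> K \<and> s_le K F \<and> s_le K H \<longrightarrow> s_le K M)"
  have "s_le M (mt F H)" using mt_glb[OF F H] M by blast
  moreover have "s_le (mt F H) M" using M m(1) mt_le[OF F H c] by blast
  ultimately show "M = mt F H" using s_antisym M m(1) by blast
qed

end

context pdl begin

lemma okI: assumes "V \<subseteq> {1..p}" "\<And>i. i \<in> V \<Longrightarrow> \<tau> i \<in> V" "A \<subseteq> E" "E \<subseteq> F_V p"
  "\<And>e. e \<in> E \<Longrightarrow> e \<notin> A \<Longrightarrow> T e \<in> E \<and> T e \<notin> A \<and> T e \<noteq> e"
  shows "okT p \<tau> E V A"
  unfolding okT_def
proof (intro conjI ballI)
  show "V \<subseteq> {1..p}" "A \<subseteq> E" "E \<subseteq> F_V p" by (fact assms(1), fact assms(3), fact assms(4))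
  fix i assume "i \<in> V" then show "\<tau> i \<in> V" by (rule assms(2))
next
  fix e assume "e \<in> E - A"
  then have "e \<in> E" "e \<notin> A" by simp_all
  from assms(5)[OF this] show "T e \<in> E - A" "T e \<noteq> e" by simp_all
qed

lemma cover_step: assumes F: "is_pdCG p \<tau> F" and G: "is_pdCG p \<tau> G" and cov: "covered_s p \<tau> F G"
  and ok: "okT p \<tau> E' V' A'"
  and s1: "edges F \<subseteq> E'" "AV F \<subseteq> V'" "AE F \<subseteq> A'"
  and s2: "E' \<subseteq> edges G" "V' \<subseteq> AV G" "A' \<subseteq> AE G"
  and d: "E' \<noteq> edges G \<or> V' \<noteq> AV G \<or> A' \<noteq> AE G"
  shows "edges F = E' \<and> AV F = V' \<and> AE F = A'"
proof -
  let ?G = "mk p \<tau> E' V' A'"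
  note g = mk_all[OF ok]
  have 1: "s_le F ?G" unfolding s_le_iff[OF F g(1)] g(2,3,4) using s1 by simp
  have 2: "s_le ?G G" unfolding s_le_iff[OF g(1) G] g(2,3,4) using s2 by simp
  have 3: "?G \<noteq> G"
  proof
    assume "?G = G"
    then have "edges G = E'" "AV G = V'" "AE G = A'" using g(2,3,4) by auto
    then show False using d by simp
  qed
  have "\<not> (s_less F ?G \<and> s_less ?G G)" using cov g(1) unfolding covered_s_def by blast
  then have "F = ?G" using 1 2 3 unfolding s_less_def by simp
  then show ?thesis using g(2,3,4) by simp
qed

lemma cover_cases: assumes F: "is_pdCG p \<tau> F" and G: "is_pdCG p \<tau> G" and cov: "covered_s p \<tau> F G"
  shows "(\<exists>i\<in>AV G. edges F = edges G \<and> AE F = AE G \<and> AV F = AV G - {i, \<tau> i}) \<or>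
    (\<exists>e\<in>edges G - AE G. edges F = edges G - {e, T e} \<and> AV F = AV G \<and> AE F = AE G) \<or>
    (\<exists>e\<in>AE G. edges F = edges G - {e} \<and> AV F = AV G \<and> AE F = AE G - {e}) \<or>
    (\<exists>e\<in>AE G. T e \<in> AE G \<and> T e \<noteq> e \<and> edges F = edges G \<and> AV F = AV G \<and> AE F = AE G - {e, T e})"
proof -
  have sl: "s_le F G" "F \<noteq> G" using cov unfolding covered_s_def s_less_def by auto
  then have eF: "edges F \<subseteq> edges G" and vF: "AV F \<subseteq> AV G" and aF: "AE F \<subseteq> AE G"
    unfolding s_le_iff[OF F G] by auto
  note oG = okD[OF pd_ok[OF G]]
  note step = cover_step[OF F G cov]
  show ?thesis
  proof (cases "AV F = AV G")
    case False
    then obtain i where i: "i \<in> AV G" "i \<notin> AV F" using vF by auto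
    have iV: "i \<in> {1..p}" using K1(1)[OF G i(1)] .
    note ti = tauV[OF iV]
    have ok: "okT p \<tau> (edges G) (AV G - {i, \<tau> i}) (AE G)"
    proof (rule okI)
      show "AV G - {i, \<tau> i} \<subseteq> {1..p}" using oG(1) by auto
      show "AE G \<subseteq> edges G" "edges G \<subseteq> F_V p" by (fact oG(3), fact oG(4))
      show "\<And>e. e \<in> edges G \<Longrightarrow> e \<notin> AE G \<Longrightarrow> T e \<in> edges G \<and> T e \<notin> AE G \<and> T e \<noteq> e" by (rule oG(5))
      fix j assume j: "j \<in> AV G - {i, \<tau> i}"
      have jV: "j \<in> {1..p}" using j oG(1) by auto
      note tj = tauV[OF jV]
      have "\<tau> j \<in> AV G" using j oG(2) by simp
      moreover have "\<tau> j \<noteq> i" using j tj by auto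
      moreover have "\<tau> j \<noteq> \<tau> i" using j tj ti by (metis DiffE insertI1)
      ultimately show "\<tau> j \<in> AV G - {i, \<tau> i}" by simp
    qed
    have "AV F \<subseteq> AV G - {i, \<tau> i}"
    proof
      fix x assume x: "x \<in> AV F"
      have "x \<noteq> \<tau> i"
      proof
        assume "x = \<tau> i" then have "\<tau> x = i" using ti by simp
        then show False using K1(2)[OF F x] i(2) by simp
      qed
      then show "x \<in> AV G - {i, \<tau> i}" using x vF i(2) by auto
    qed
    moreover have "AV G - {i, \<tau> i} \<noteq> AV G" using i(1) by auto
    ultimately have "edges F = edges G \<and> AV F = AV G - {i, \<tau> i} \<and> AE F = AE G"
      using step[OF ok] eF aF by auto
    then show ?thesis using i(1) by (intro disjI1 bexI[of _ i]) simp_all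
  next
    case vv: True
    show ?thesis
    proof (cases "edges F = edges G")
      case False
      then obtain e where e: "e \<in> edges G" "e \<notin> edges F" using eF by auto
      have eV: "e \<in> F_V p" using e(1) oG(4) by auto
      have TT: "T (T e) = e" using T_FV[OF eV] by simp
      show ?thesis
      proof (cases "e \<in> AE G")
        case False
        have te: "T e \<in> edges G" "T e \<notin> AE G" "T e \<noteq> e" using oG(5)[OF e(1) False] by auto
        have ok: "okT p \<tau> (edges G - {e, T e}) (AV G) (AE G)"
        proof (rule okI)
          show "AV G \<subseteq> {1..p}" "\<And>i. i \<in> AV G \<Longrightarrow> \<tau> i \<in> AV G" by (fact oG(1), fact oG(2))
          show "AE G \<subseteq> edges G - {e, T e}" using oG(3) False te by auto
          show "edges G - {e, T e} \<subseteq> F_V p" using oG(4) by auto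
          fix x assume x: "x \<in> edges G - {e, T e}" "x \<notin> AE G"
          have xV: "x \<in> F_V p" using x oG(4) by auto
          have TTx: "T (T x) = x" using T_FV[OF xV] by simp
          have tx: "T x \<in> edges G" "T x \<notin> AE G" "T x \<noteq> x" using oG(5)[of x] x by auto
          have "T x \<noteq> e" using TTx x(1) by auto
          moreover have "T x \<noteq> T e" using TTx TT x(1) by (metis DiffE insertI1)
          ultimately show "T x \<in> edges G - {e, T e} \<and> T x \<notin> AE G \<and> T x \<noteq> x" using tx by simp
        qed
        have "T e \<notin> edges F"
        proof
          assume h: "T e \<in> edges F"
          have "T e \<in> AE F"
          proof (rule ccontr)
            assume "T e \<notin> AE F"
            then have "T (T e) \<in> edges F" using K3(1)[OF F h] by simp
            then show False using TT e(2) by simp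
          qed
          then show False using aF te(2) by auto
        qed
        then have "edges F \<subseteq> edges G - {e, T e}" using eF e(2) by auto
        moreover have "edges G - {e, T e} \<noteq> edges G" using e(1) by auto
        ultimately have "edges F = edges G - {e, T e} \<and> AV F = AV G \<and> AE F = AE G"
          using step[OF ok] vv aF by auto
        then show ?thesis using e(1) False by (intro disjI2 disjI1 bexI[of _ e]) simp_all
      next
        case True
        have ok: "okT p \<tau> (edges G - {e}) (AV G) (AE G - {e})"
        proof (rule okI)
          show "AV G \<subseteq> {1..p}" "\<And>i. i \<in> AV G \<Longrightarrow> \<tau> i \<in> AV G" by (fact oG(1), fact oG(2))
          show "AE G - {e} \<subseteq> edges G - {e}" using oG(3) by auto
          show "edges G - {e} \<subseteq> F_V p" using oG(4) by auto
          fix x assume x: "x \<in> edges G - {e}" "x \<notin> AE G - {e}"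
          then have x2: "x \<in> edges G" "x \<notin> AE G" by auto
          have tx: "T x \<in> edges G" "T x \<notin> AE G" "T x \<noteq> x" using oG(5)[OF x2] by auto
          have "T x \<noteq> e" using tx(2) True by auto
          then show "T x \<in> edges G - {e} \<and> T x \<notin> AE G - {e} \<and> T x \<noteq> x" using tx by simp
        qed
        have "edges F \<subseteq> edges G - {e}" using eF e(2) by auto
        moreover have "AE F \<subseteq> AE G - {e}" using aF e(2) K2(1)[OF F] by auto
        moreover have "edges G - {e} \<noteq> edges G" using e(1) by auto
        ultimately have "edges F = edges G - {e} \<and> AV F = AV G \<and> AE F = AE G - {e}"
          using step[OF ok] vv by auto
        then show ?thesis using True by (intro disjI2 disjI1 bexI[of _ e]) simp_all
      qed
    next
      case ee: True
      have "AE F \<noteq> AE G" using sl(2) pd_eq[OF F G] vv ee by auto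
      then obtain e where e: "e \<in> AE G" "e \<notin> AE F" using aF by auto
      have eG: "e \<in> edges G" using e(1) oG(3) by auto
      then have eFe: "e \<in> edges F" using ee by simp
      have eV: "e \<in> F_V p" using eG oG(4) by auto
      have TT: "T (T e) = e" using T_FV[OF eV] by simp
      have te: "T e \<in> edges F" "T e \<notin> AE F" "T e \<noteq> e" using K3[OF F eFe e(2)] by auto
      have teG: "T e \<in> AE G" using K3'[OF G e(1)] te(1) ee by simp
      have ok: "okT p \<tau> (edges G) (AV G) (AE G - {e, T e})"
      proof (rule okI)
        show "AV G \<subseteq> {1..p}" "\<And>i. i \<in> AV G \<Longrightarrow> \<tau> i \<in> AV G" by (fact oG(1), fact oG(2))
        show "AE G - {e, T e} \<subseteq> edges G" using oG(3) by auto
        show "edges G \<subseteq> F_V p" by (fact oG(4))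
        fix x assume x: "x \<in> edges G" "x \<notin> AE G - {e, T e}"
        show "T x \<in> edges G \<and> T x \<notin> AE G - {e, T e} \<and> T x \<noteq> x"
        proof (cases "x \<in> AE G")
          case False
          then show ?thesis using oG(5)[OF x(1) False] by auto
        next
          case True
          then have "x = e \<or> x = T e" using x(2) by auto
          then show ?thesis
          proof
            assume "x = e" then show ?thesis using te ee by auto
          next
            assume "x = T e" then show ?thesis using TT te eG by auto
          qed
        qed
      qed
      have "AE F \<subseteq> AE G - {e, T e}" using aF e(2) te(2) by auto
      moreover have "AE G - {e, T e} \<noteq> AE G" using e(1) by auto
      ultimately have "edges F = edges G \<and> AV F = AV G \<and> AE F = AE G - {e, T e}"
        using step[OF ok] vv ee by auto
      then show ?thesis using e(1) teG te(3) by (intro disjI2 bexI[of _ e]) simp_all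
    qed
  qed
qed

end

context pdl begin

lemma sle3: assumes "is_pdCG p \<tau> X" "is_pdCG p \<tau> G" "s_le X G"
  shows "edges X \<subseteq> edges G" "AV X \<subseteq> AV G" "AE X \<subseteq> AE G"
  using assms(3) unfolding s_le_iff[OF assms(1,2)] by auto

lemma cov_le: "covered_s p \<tau> X G \<Longrightarrow> s_le X G"
  unfolding covered_s_def s_less_def by simp

lemma PA_mono: assumes "edges X \<subseteq> edges G" "AE X \<subseteq> AE G" shows "PA \<tau> X \<subseteq> PA \<tau> G"
  using assms unfolding PA_def by auto

lemma PA_mt: assumes F: "is_pdCG p \<tau> F" and H: "is_pdCG p \<tau> H"
  shows "PA \<tau> (mt F H) = PA \<tau> F \<inter> PA \<tau> H"
proof -
  note m = mt_all[OF F H]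
  show ?thesis unfolding PA_def m(2,4) AM_def EM_def using K2(1)[OF F] K2(1)[OF H] by auto
qed

lemma t_le_refl3: assumes "is_pdCG p \<tau> X" "is_pdCG p \<tau> Y" "edges X = edges Y" "AV X = AV Y" "AE X = AE Y"
  shows "t_le p q \<tau> X Y"
  unfolding t_le_iff[OF assms(1,2)] PA_def using assms(3-5) by simp

lemma T_inv_edges: assumes "is_pdCG p \<tau> X" "x \<in> edges X" shows "T (T x) = x" "T x \<in> F_V p"
proof -
  have "x \<in> F_V p" using K2(2)[OF assms(1)] assms(2) by (rule subsetD)
  from T_FV[OF this] show "T (T x) = x" "T x \<in> F_V p" by simp_all
qed

lemma half: assumes F: "is_pdCG p \<tau> F" and H: "is_pdCG p \<tau> H" and G: "is_pdCG p \<tau> G"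
  and cF: "covered_s p \<tau> F G" and cH: "covered_s p \<tau> H G" and nt: "\<not> t_le p q \<tau> F H"
  and e: "e \<in> edges F" "e \<in> edges H" "T e \<notin> edges F"
  shows "e \<in> AE H"
proof (rule ccontr)
  assume nH: "e \<notin> AE H"
  have teH: "T e \<in> edges H" using K3(1)[OF H e(2) nH] .
  note sH = sle3[OF H G cov_le[OF cH]]
  note sF = sle3[OF F G cov_le[OF cF]]
  have teG: "T e \<in> edges G" using teH sH(1) by auto
  have eG: "e \<in> edges G" using e(1) sF(1) by auto
  have TT: "T (T e) = e" using T_inv_edges[OF G eG] by simp
  from cover_cases[OF F G cF] show False
  proof (elim disjE bexE conjE)
    fix i assume "edges F = edges G" then show False using teG e(3) by simp
  next
    fix e' assume e': "e' \<in> edges G - AE G" "edges F = edges G - {e', T e'}"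
    have "e' \<in> edges G" using e'(1) by simp
    then have TT': "T (T e') = e'" using T_inv_edges[OF G] by simp
    have "T e \<in> {e', T e'}" using e'(2) teG e(3) by auto
    then have "e \<in> {T e', e'}" using TT TT' by auto
    then show False using e(1) e'(2) by auto
  next
    fix e' assume e': "e' \<in> AE G" "edges F = edges G - {e'}" "AV F = AV G" "AE F = AE G - {e'}"
    have Te: "T e = e'" using e'(2) teG e(3) by auto
    have eA: "e \<in> AE G" using K3'[OF G, of "T e"] Te e'(1) TT eG by simp
    from cover_cases[OF H G cH] show False
    proof (elim disjE bexE conjE)
      fix i assume "AE H = AE G" then show False using eA nH by simp
    next
      fix f assume "AE H = AE G" then show False using eA nH by simp
    next
      fix f assume f: "edges H = edges G - {f}" "AE H = AE G - {f}"
      then have "e = f" using eA nH by auto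
      then show False using f(1) e(2) by simp
    next
      fix f assume f: "f \<in> AE G" "T f \<in> AE G" "T f \<noteq> f" "edges H = edges G" "AV H = AV G" "AE H = AE G - {f, T f}"
      have "f \<in> edges G" using f(1) K2(1)[OF G] by (rule subsetD[rotated])
      then have TTf: "T (T f) = f" using T_inv_edges[OF G] by simp
      have ef: "e = f \<or> e = T f" using f(6) eA nH by auto
      have fe: "{f, T f} = {e, T e}" using ef TTf by auto
      have "t_le p q \<tau> F H" unfolding t_le_iff[OF F H]
      proof (intro conjI)
        show "edges F \<subseteq> edges H" using sF(1) f(4) by simp
        show "AV F \<subseteq> AV H" using e'(3) f(5) by simp
        show "PA \<tau> F \<subseteq> PA \<tau> H"
        proof
          fix x assume "x \<in> PA \<tau> F"
          then have x: "x \<in> AE F" "T x \<in> edges F" "T x \<noteq> x" unfolding PA_def by auto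
          have "x \<noteq> e" using x(2) e(3) by auto
          moreover have "x \<noteq> T e" using x(1) e'(4) Te by auto
          ultimately have "x \<in> AE H" using x(1) e'(4) f(6) fe by auto
          then show "x \<in> PA \<tau> H" unfolding PA_def using x(2,3) sF(1) f(4) by auto
        qed
      qed
      then show False using nt by simp
    qed
  next
    fix e' assume "edges F = edges G" then show False using teG e(3) by simp
  qed
qed

end

context pdl begin

lemma compat_lem: assumes F: "is_pdCG p \<tau> F" and H: "is_pdCG p \<tau> H" and G: "is_pdCG p \<tau> G"
  and cF: "covered_s p \<tau> F G" and cH: "covered_s p \<tau> H G"
  and n1: "\<not> t_le p q \<tau> F H" and n2: "\<not> t_le p q \<tau> H F"
  shows "compat F H"
  unfolding compat_def EM_def
proof (intro ballI impI)
  fix e assume e: "e \<in> edges F \<inter> edges H" and c: "T e \<notin> edges F \<inter> edges H \<or> T e = e"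
  have eF: "e \<in> edges F" and eH: "e \<in> edges H" using e by auto
  have aF: "e \<in> AE F" if "T e \<notin> edges F \<or> T e = e"
  proof (rule ccontr)
    assume "e \<notin> AE F" then show False using K3[OF F eF] that by auto
  qed
  have aH: "e \<in> AE H" if "T e \<notin> edges H \<or> T e = e"
  proof (rule ccontr)
    assume "e \<notin> AE H" then show False using K3[OF H eH] that by auto
  qed
  from c consider "T e = e" | "T e \<notin> edges F" | "T e \<notin> edges H" by auto
  then show "e \<in> AE F \<and> e \<in> AE H"
  proof cases
    case 1 then show ?thesis using aF aH by simp
  next
    case 2 then show ?thesis using aF half[OF F H G cF cH n1 eF eH] by simp
  next
    case 3 then show ?thesis using aH half[OF H F G cH cF n2 eH eF] by simp
  qed
qed

lemma AV_pair: assumes X: "is_pdCG p \<tau> X" and "j \<in> AV X" "j \<in> {i, \<tau> i}" "i \<in> {1..p}" shows "i \<in> AV X"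
proof -
  have "j = i \<or> j = \<tau> i" using assms(3) by simp
  then show ?thesis
  proof
    assume "j = \<tau> i" then have "\<tau> j = i" using tauV[OF assms(4)] by simp
    then show ?thesis using K1(2)[OF X assms(2)] by simp
  qed (use assms(2) in simp)
qed

lemma PA_T: assumes X: "is_pdCG p \<tau> X" and x: "x \<in> PA \<tau> X" shows "T x \<in> PA \<tau> X"
proof -
  have x3: "x \<in> AE X" "T x \<in> edges X" "T x \<noteq> x" using x unfolding PA_def by auto
  have xE: "x \<in> edges X" using x3(1) K2(1)[OF X] by (rule subsetD[rotated])
  have TT: "T (T x) = x" using T_inv_edges[OF X xE] by simp
  have "T x \<in> AE X" using K3'[OF X x3(1,2)] .
  then show ?thesis unfolding PA_def using TT xE x3(3) by simp
qed

lemma atom_in: assumes X: "is_pdCG p \<tau> X" and G: "is_pdCG p \<tau> G" and F': "is_pdCG p \<tau> F'"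
  and cX: "covered_s p \<tau> X G"
  and e: "e \<in> AE G" and f: "edges F' = edges G - {e}" "AV F' = AV G" "AE F' = AE G - {e}"
  and nt: "\<not> t_le p q \<tau> X F'"
  shows "e \<in> edges X"
proof (rule ccontr)
  assume ne: "e \<notin> edges X"
  have eG: "e \<in> edges G" using e K2(1)[OF G] by (rule subsetD[rotated])
  from cover_cases[OF X G cX] show False
  proof (elim disjE bexE conjE)
    fix i assume "edges X = edges G" then show False using ne eG by simp
  next
    fix e' assume e': "e' \<in> edges G - AE G" "edges X = edges G - {e', T e'}"
    have "e' \<in> edges G" using e'(1) by simp
    then have TT': "T (T e') = e'" using T_inv_edges[OF G] by simp
    have "e \<in> {e', T e'}" using e'(2) eG ne by auto
    then have "e = e' \<or> e = T e'" by simp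
    then show False
    proof
      assume "e = e'" then show False using e e'(1) by simp
    next
      assume h: "e = T e'"
      have "T e' \<notin> AE G" using K3(2)[OF G] e'(1) by simp
      then show False using h e by simp
    qed
  next
    fix e' assume e': "e' \<in> AE G" "edges X = edges G - {e'}" "AV X = AV G" "AE X = AE G - {e'}"
    have "e = e'" using e'(2) eG ne by auto
    then have "t_le p q \<tau> X F'" using t_le_refl3[OF X F'] e' f by simp
    then show False using nt by simp
  next
    fix e' assume "edges X = edges G" then show False using ne eG by simp
  qed
qed

lemma inc: assumes F: "is_pdCG p \<tau> F" and F': "is_pdCG p \<tau> F'" and H: "is_pdCG p \<tau> H" and G: "is_pdCG p \<tau> G"
  and cF: "covered_s p \<tau> F G" and cF': "covered_s p \<tau> F' G" and cH: "covered_s p \<tau> H G"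
  and n1: "\<not> t_le p q \<tau> F F'" and n2: "\<not> t_le p q \<tau> H F'"
  shows "\<not> t_le p q \<tau> (mt F H) (mt F' H)"
proof
  assume t: "t_le p q \<tau> (mt F H) (mt F' H)"
  note m = mt_all[OF F H] and m' = mt_all[OF F' H]
  have t3: "edges F \<inter> edges H \<subseteq> edges F' \<inter> edges H" "AV F \<inter> AV H \<subseteq> AV F' \<inter> AV H"
    "PA \<tau> F \<inter> PA \<tau> H \<subseteq> PA \<tau> F' \<inter> PA \<tau> H"
    using t unfolding t_le_iff[OF m(1) m'(1)] m(2,3) m'(2,3) PA_mt[OF F H] PA_mt[OF F' H] by auto
  note sF = sle3[OF F G cov_le[OF cF]] and sH = sle3[OF H G cov_le[OF cH]]
  have pF: "PA \<tau> F \<subseteq> PA \<tau> G" using PA_mono sF by simp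
  have pH: "PA \<tau> H \<subseteq> PA \<tau> G" using PA_mono sH by simp
  from cover_cases[OF F' G cF'] show False
  proof (elim disjE bexE conjE)
    fix i assume i: "i \<in> AV G" "edges F' = edges G" "AE F' = AE G" "AV F' = AV G - {i, \<tau> i}"
    have iV: "i \<in> {1..p}" using K1(1)[OF G i(1)] .
    have pG: "PA \<tau> F' = PA \<tau> G" unfolding PA_def i(2,3) ..
    have "\<not> AV F \<subseteq> AV F'" using n1 unfolding t_le_iff[OF F F'] pG i(2) using sF(1) pF by simp
    then obtain j where j: "j \<in> AV F" "j \<notin> AV F'" by auto
    have "j \<in> {i, \<tau> i}" using j sF(2) i(4) by auto
    then have iF: "i \<in> AV F" using AV_pair[OF F j(1) _ iV] by simp
    have "\<not> AV H \<subseteq> AV F'" using n2 unfolding t_le_iff[OF H F'] pG i(2) using sH(1) pH by simp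
    then obtain k where k: "k \<in> AV H" "k \<notin> AV F'" by auto
    have "k \<in> {i, \<tau> i}" using k sH(2) i(4) by auto
    then have iH: "i \<in> AV H" using AV_pair[OF H k(1) _ iV] by simp
    have "i \<in> AV F'" using t3(2) iF iH by auto
    then show False using i(4) by simp
  next
    fix e assume e: "e \<in> edges G - AE G" "edges F' = edges G - {e, T e}" "AV F' = AV G" "AE F' = AE G"
    have eG: "e \<in> edges G" using e(1) by simp
    have TT: "T (T e) = e" using T_inv_edges[OF G eG] by simp
    have teA: "T e \<notin> AE G" using K3(2)[OF G eG] e(1) by simp
    have pG: "PA \<tau> G \<subseteq> PA \<tau> F'"
    proof
      fix x assume "x \<in> PA \<tau> G"
      then have x: "x \<in> AE G" "T x \<in> edges G" "T x \<noteq> x" unfolding PA_def by auto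
      have xE: "x \<in> edges G" using x(1) K2(1)[OF G] by (rule subsetD[rotated])
      have TTx: "T (T x) = x" using T_inv_edges[OF G xE] by simp
      have "T x \<noteq> e" using TTx x(1) teA by auto
      moreover have "T x \<noteq> T e" using TTx TT x(1) e(1) by (metis DiffD2)
      ultimately show "x \<in> PA \<tau> F'" unfolding PA_def e(2,4) using x by simp
    qed
    have pin: "e \<in> edges X" if X: "is_pdCG p \<tau> X" and sX: "edges X \<subseteq> edges G" "AE X \<subseteq> AE G"
      and ni: "\<not> edges X \<subseteq> edges F'" for X
    proof -
      obtain x where x: "x \<in> edges X" "x \<notin> edges F'" using ni by auto
      have xe: "x = e \<or> x = T e" using x sX(1) e(2) by auto
      have xA: "x \<notin> AE X" using xe sX(2) e(1) teA by auto
      have tx: "T x \<in> edges X" using K3(1)[OF X x(1) xA] .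
      show ?thesis using xe x(1) tx TT by auto
    qed
    have "\<not> edges F \<subseteq> edges F'" using n1 unfolding t_le_iff[OF F F'] e(3) using sF(2) pF pG by auto
    then have eF: "e \<in> edges F" using pin[OF F sF(1) sF(3)] by simp
    have "\<not> edges H \<subseteq> edges F'" using n2 unfolding t_le_iff[OF H F'] e(3) using sH(2) pH pG by auto
    then have eH: "e \<in> edges H" using pin[OF H sH(1) sH(3)] by simp
    have "e \<in> edges F'" using t3(1) eF eH by auto
    then show False using e(2) by simp
  next
    fix e assume e: "e \<in> AE G" "edges F' = edges G - {e}" "AV F' = AV G" "AE F' = AE G - {e}"
    have eF: "e \<in> edges F" using atom_in[OF F G F' cF e(1) e(2,3,4) n1] .
    have eH: "e \<in> edges H" using atom_in[OF H G F' cH e(1) e(2,3,4) n2] .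
    have "e \<in> edges F'" using t3(1) eF eH by auto
    then show False using e(2) by simp
  next
    fix e assume e: "e \<in> AE G" "T e \<in> AE G" "T e \<noteq> e" "edges F' = edges G" "AV F' = AV G" "AE F' = AE G - {e, T e}"
    have eG: "e \<in> edges G" using e(1) K2(1)[OF G] by (rule subsetD[rotated])
    have TT: "T (T e) = e" using T_inv_edges[OF G eG] by simp
    have pG: "PA \<tau> G - {e, T e} \<subseteq> PA \<tau> F'" unfolding PA_def e(4,6) by auto
    have pin: "e \<in> PA \<tau> X" if X: "is_pdCG p \<tau> X" and pX: "PA \<tau> X \<subseteq> PA \<tau> G"
      and ni: "\<not> PA \<tau> X \<subseteq> PA \<tau> F'" for X
    proof -
      obtain x where x: "x \<in> PA \<tau> X" "x \<notin> PA \<tau> F'" using ni by auto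
      have "x = e \<or> x = T e" using x pX pG by auto
      then show ?thesis
      proof
        assume "x = T e" then have "T x = e" using TT by simp
        then show ?thesis using PA_T[OF X x(1)] by simp
      qed (use x(1) in simp)
    qed
    have "\<not> PA \<tau> F \<subseteq> PA \<tau> F'" using n1 unfolding t_le_iff[OF F F'] e(4,5) using sF(1,2) by auto
    then have eF: "e \<in> PA \<tau> F" using pin[OF F pF] by simp
    have "\<not> PA \<tau> H \<subseteq> PA \<tau> F'" using n2 unfolding t_le_iff[OF H F'] e(4,5) using sH(1,2) by auto
    then have eH: "e \<in> PA \<tau> H" using pin[OF H pH] by simp
    have "e \<in> PA \<tau> F'" using t3(3) eF eH by auto
    then show False unfolding PA_def e(6) by simp
  qed
qed

end

context pdl begin

lemma forced: assumes X: "is_pdCG p \<tau> X" and "x \<in> edges X" and "T x \<notin> edges X \<or> T x = x" shows "x \<in> AE X"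
proof (rule ccontr)
  assume "x \<notin> AE X" then show False using K3[OF X assms(2)] assms(3) by auto
qed

lemma covB: assumes F: "is_pdCG p \<tau> F" and H: "is_pdCG p \<tau> H" and G: "is_pdCG p \<tau> G"
  and cF: "covered_s p \<tau> F G" and cH: "covered_s p \<tau> H G" and c: "compat F H"
  and n2: "\<not> t_le p q \<tau> H F"
  shows "covered_s p \<tau> (mt F H) H"
proof -
  note m = mt_all[OF F H]
  have le: "s_le (mt F H) H" using mt_le[OF F H c] by simp
  have ne: "mt F H \<noteq> H"
  proof
    assume eq: "mt F H = H"
    have "t_le p q \<tau> H F" unfolding t_le_iff[OF H F]
      using m(2,3) PA_mt[OF F H] eq by (metis Int_lower1)
    then show False using n2 by simp
  qed
  note sF = sle3[OF F G cov_le[OF cF]] and sH = sle3[OF H G cov_le[OF cH]]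
  have nok: False if K: "is_pdCG p \<tau> K" and k1: "s_le (mt F H) K" "K \<noteq> mt F H" and k2: "s_le K H" "K \<noteq> H" for K
  proof -
    have EK: "edges F \<inter> edges H \<subseteq> edges K" "edges K \<subseteq> edges H"
      and VK: "AV F \<inter> AV H \<subseteq> AV K" "AV K \<subseteq> AV H"
      and AK: "AM F H \<subseteq> AE K" "AE K \<subseteq> AE H"
      using k1(1) k2(1) unfolding s_le_iff[OF m(1) K] s_le_iff[OF K H] m(2,3,4) by auto
    have toM: False if "edges K = edges F \<inter> edges H" "AV K = AV F \<inter> AV H" "AE K = AM F H"
      using pd_eq[OF K m(1)] that m(2,3,4) k1(2) by simp
    have toH: False if "edges K = edges H" "AV K = AV H" "AE K = AE H"
      using pd_eq[OF K H] that k2(2) by simp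
    have vg: "AV G \<inter> AV H = AV H" using sH(2) by auto
    have AMs: "AE F \<inter> AE H \<subseteq> AM F H" unfolding AM_def by auto
    have AMf: "x \<in> AM F H" if "x \<in> edges F" "x \<in> edges H" "T x \<notin> edges F \<inter> edges H \<or> T x = x" for x
      unfolding AM_def EM_def using that by auto
    from cover_cases[OF F G cF] show False
    proof (elim disjE bexE conjE)
      fix i assume i: "i \<in> AV G" "edges F = edges G" "AE F = AE G" "AV F = AV G - {i, \<tau> i}"
      have iV: "i \<in> {1..p}" using K1(1)[OF G i(1)] .
      have eK: "edges K = edges H" using EK i(2) sH(1) by auto
      have amh: "AE H \<subseteq> AM F H" using AMs i(3) sH(3) by auto
      then have aK: "AE K = AE H" using AK by auto
      show False
      proof (cases "i \<in> AV K")
        case True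
        then have "\<tau> i \<in> AV K" using K1(2)[OF K] by simp
        then have "AV H \<subseteq> AV K" using True VK(1) i(4) sH(2) by auto
        then show False using toH eK aK VK(2) by auto
      next
        case False
        then have "\<tau> i \<notin> AV K" using AV_pair[OF K _ _ iV, of "\<tau> i"] by auto
        then have "AV K \<subseteq> AV F \<inter> AV H" using False VK(2) i(4) sH(2) by auto
        moreover have "AM F H \<subseteq> AE H" using mt_le(2)[OF F H c] unfolding s_le_iff[OF m(1) H] m(4) by simp
        ultimately have "AE K = AM F H" "AV K = AV F \<inter> AV H" "edges K = edges F \<inter> edges H"
          using aK amh VK(1) eK i(2) sH(1) by auto
        then show False using toM by simp
      qed
    next
      fix e assume e: "e \<in> edges G - AE G" "edges F = edges G - {e, T e}" "AV F = AV G" "AE F = AE G"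
      have eG: "e \<in> edges G" using e(1) by simp
      have TT: "T (T e) = e" using T_inv_edges[OF G eG] by simp
      have teA: "T e \<notin> AE G" using K3(2)[OF G eG] e(1) by simp
      have vK: "AV K = AV H" using VK e(3) sH(2) by auto
      have amH: "AM F H = AE H"
      proof -
        have "AE H \<subseteq> AM F H" using AMs e(4) sH(3) by auto
        moreover have "AM F H \<subseteq> AE H" using AK by simp
        ultimately show ?thesis by simp
      qed
      have aK: "AE K = AE H" using AK amH by simp
      have nA: "e \<notin> AE K" "T e \<notin> AE K" using aK sH(3) e(1) teA by auto
      show False
      proof (cases "e \<in> edges K \<or> T e \<in> edges K")
        case True
        have both: "e \<in> edges K" "T e \<in> edges K"
        proof -
          from True show "e \<in> edges K"
          proof
            assume h: "T e \<in> edges K"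
            show "e \<in> edges K" using K3(1)[OF K h nA(2)] TT by simp
          qed simp
          then show "T e \<in> edges K" using K3(1)[OF K _ nA(1)] by simp
        qed
        have "edges H \<subseteq> edges K"
        proof
          fix x assume x: "x \<in> edges H"
          show "x \<in> edges K"
          proof (cases "x = e \<or> x = T e")
            case True then show ?thesis using both by auto
          next
            case False then have "x \<in> edges F" using x sH(1) e(2) by auto
            then show ?thesis using x EK(1) by auto
          qed
        qed
        then show False using toH EK(2) vK aK by auto
      next
        case False
        then have "edges K \<subseteq> edges F \<inter> edges H" using EK(2) sH(1) e(2) by auto
        then have "edges K = edges F \<inter> edges H" using EK(1) by auto
        moreover have "AV K = AV F \<inter> AV H" using vK e(3) vg by auto
        ultimately show False using toM aK amH by auto
      qed
    next
      fix e assume e: "e \<in> AE G" "edges F = edges G - {e}" "AV F = AV G" "AE F = AE G - {e}"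
      have eG: "e \<in> edges G" using e(1) K2(1)[OF G] by (rule subsetD[rotated])
      have TT: "T (T e) = e" using T_inv_edges[OF G eG] by simp
      have vK: "AV K = AV H" using VK e(3) sH(2) by auto
      show False
      proof (cases "e \<in> edges K")
        case False
        have ek: "edges K \<subseteq> edges F \<inter> edges H" using False EK(2) sH(1) e(2) by auto
        have "AE K \<subseteq> AE F \<inter> AE H" using AK(2) K2(1)[OF K] False sH(3) e(4) by auto
        then have "AE K \<subseteq> AM F H" using AMs by auto
        then have "AE K = AM F H" using AK(1) by auto
        moreover have "edges K = edges F \<inter> edges H" using ek EK(1) by auto
        moreover have "AV K = AV F \<inter> AV H" using vK e(3) vg by auto
        ultimately show False using toM by auto
      next
        case True
        have eK: "edges K = edges H"
        proof -
          have "edges H \<subseteq> edges K"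
          proof
            fix x assume x: "x \<in> edges H"
            show "x \<in> edges K"
            proof (cases "x = e")
              case True then show ?thesis using \<open>e \<in> edges K\<close> by simp
            next
              case False then show ?thesis using x sH(1) e(2) EK(1) by auto
            qed
          qed
          then show ?thesis using EK(2) by auto
        qed
        have "AE H \<subseteq> AE K"
        proof
          fix x assume x: "x \<in> AE H"
          show "x \<in> AE K"
          proof (cases "x = e")
            case False
            then have "x \<in> AE F \<inter> AE H" using x sH(3) e(4) by auto
            then show ?thesis using AMs AK(1) by auto
          next
            case xe: True
            show ?thesis
            proof (cases "T e \<notin> edges K \<or> T e = e")
              case True then show ?thesis using forced[OF K \<open>e \<in> edges K\<close>] xe by simp
            next
              case False
              then have te: "T e \<in> edges H" "T e \<noteq> e" using eK by auto
              have "T e \<in> edges F" using te sH(1) e(2) by auto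
              then have "T e \<in> AM F H" using AMf[of "T e"] te TT e(2) by auto
              then have "T e \<in> AE K" using AK(1) by auto
              moreover have "T (T e) \<in> edges K" using TT \<open>e \<in> edges K\<close> by simp
              ultimately have "T (T e) \<in> AE K" by (rule K3'[OF K])
              then show ?thesis using TT xe by simp
            qed
          qed
        qed
        then show False using toH eK vK AK(2) by auto
      qed
    next
      fix e assume e: "e \<in> AE G" "T e \<in> AE G" "T e \<noteq> e" "edges F = edges G" "AV F = AV G" "AE F = AE G - {e, T e}"
      have eG: "e \<in> edges G" using e(1) K2(1)[OF G] by (rule subsetD[rotated])
      have TT: "T (T e) = e" using T_inv_edges[OF G eG] by simp
      have vK: "AV K = AV H" using VK e(5) sH(2) by auto
      have eK: "edges K = edges H" using EK e(4) sH(1) by auto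
      show False
      proof (cases "e \<in> AE K \<or> T e \<in> AE K")
        case True
        have b1: "e \<in> AE K" if "e \<in> edges K"
        proof -
          from True show ?thesis
          proof
            assume "T e \<in> AE K"
            moreover have "T (T e) \<in> edges K" using that TT by simp
            ultimately have "T (T e) \<in> AE K" by (rule K3'[OF K])
            then show ?thesis using TT by simp
          qed simp
        qed
        have b2: "T e \<in> AE K" if "T e \<in> edges K"
        proof -
          from True show ?thesis
          proof
            assume "e \<in> AE K"
            then show ?thesis using K3'[OF K] that by simp
          qed simp
        qed
        have "AE H \<subseteq> AE K"
        proof
          fix x assume x: "x \<in> AE H"
          have xK: "x \<in> edges K" using x K2(1)[OF H] eK by auto
          show "x \<in> AE K"
          proof (cases "x = e \<or> x = T e")
            case True then show ?thesis using b1 b2 xK by auto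
          next
            case False
            then have "x \<in> AE F \<inter> AE H" using x sH(3) e(6) by auto
            then show ?thesis using AMs AK(1) by auto
          qed
        qed
        then show False using toH eK vK AK(2) by auto
      next
        case False
        then have "AE K \<subseteq> AE F \<inter> AE H" using AK(2) sH(3) e(6) by auto
        then have "AE K = AM F H" using AMs AK(1) by auto
        moreover have "edges K = edges F \<inter> edges H" using eK e(4) sH(1) by auto
        moreover have "AV K = AV F \<inter> AV H" using vK e(5) vg by auto
        ultimately show False using toM by auto
      qed
    qed
  qed
  show ?thesis unfolding covered_s_def s_less_def using le ne nok by blast
qed

theorem main:
  fixes G H :: cgraph and A :: "cgraph set"
  assumes G: "is_pdCG p \<tau> G"
    and A_pd: "\<forall>F\<in>A. is_pdCG p \<tau> F"
    and A_inc: "\<forall>F\<in>A. \<forall>F'\<in>A. F \<noteq> F' \<longrightarrow> \<not> t_le p q \<tau> F F'"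
    and A_cov: "\<forall>F\<in>A. covered_s p \<tau> F G"
    and H: "H \<in> A"
  shows "(\<lambda>F. meet_s p \<tau> F H) ` (A - {H}) = (\<lambda>F. meet_t p q \<tau> F H) ` (A - {H}) \<and>
         (let B = (\<lambda>F. meet_t p q \<tau> F H) ` (A - {H}) in
            (\<forall>F\<in>B. \<forall>F'\<in>B. F \<noteq> F' \<longrightarrow> \<not> t_le p q \<tau> F F') \<and>
            (\<forall>F\<in>B. covered_s p \<tau> F H))"
proof -
  have Hp: "is_pdCG p \<tau> H" using A_pd H by simp
  have cH: "covered_s p \<tau> H G" using A_cov H by simp
  have props: "is_pdCG p \<tau> F \<and> covered_s p \<tau> F G \<and> \<not> t_le p q \<tau> F H \<and> \<not> t_le p q \<tau> H F"
    if "F \<in> A - {H}" for F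
    using that A_pd A_cov A_inc H by auto
  have ms: "meet_s p \<tau> F H = mt F H" and mtt: "meet_t p q \<tau> F H = mt F H" if "F \<in> A - {H}" for F
  proof -
    have P: "is_pdCG p \<tau> F" "covered_s p \<tau> F G" "\<not> t_le p q \<tau> F H" "\<not> t_le p q \<tau> H F" using props[OF that] by auto
    have c: "compat F H" using compat_lem[OF P(1) Hp G P(2) cH P(3,4)] .
    show "meet_s p \<tau> F H = mt F H" using meet_s_eq[OF P(1) Hp c] .
    show "meet_t p q \<tau> F H = mt F H" using meet_t_eq[OF P(1) Hp] .
  qed
  have i1: "(\<lambda>F. meet_s p \<tau> F H) ` (A - {H}) = (\<lambda>F. mt F H) ` (A - {H})"
    by (rule image_cong) (auto simp: ms)
  have i2: "(\<lambda>F. meet_t p q \<tau> F H) ` (A - {H}) = (\<lambda>F. mt F H) ` (A - {H})"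
    by (rule image_cong) (auto simp: mtt)
  have pw: "\<forall>X\<in>(\<lambda>F. mt F H) ` (A - {H}). \<forall>Y\<in>(\<lambda>F. mt F H) ` (A - {H}). X \<noteq> Y \<longrightarrow> \<not> t_le p q \<tau> X Y"
  proof (intro ballI impI)
    fix X Y assume X: "X \<in> (\<lambda>F. mt F H) ` (A - {H})" and Y: "Y \<in> (\<lambda>F. mt F H) ` (A - {H})" and XY: "X \<noteq> Y"
    obtain F where F: "F \<in> A - {H}" "X = mt F H" using X by auto
    obtain F' where F': "F' \<in> A - {H}" "Y = mt F' H" using Y by auto
    have "F \<noteq> F'" using F F' XY by auto
    then have n1: "\<not> t_le p q \<tau> F F'" using A_inc F(1) F'(1) by auto
    have n2: "\<not> t_le p q \<tau> H F'" using A_inc H F'(1) by auto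
    have PF: "is_pdCG p \<tau> F" "covered_s p \<tau> F G" using props[OF F(1)] by auto
    have PF': "is_pdCG p \<tau> F'" "covered_s p \<tau> F' G" using props[OF F'(1)] by auto
    show "\<not> t_le p q \<tau> X Y" using inc[OF PF(1) PF'(1) Hp G PF(2) PF'(2) cH n1 n2] F(2) F'(2) by simp
  qed
  have cv: "\<forall>X\<in>(\<lambda>F. mt F H) ` (A - {H}). covered_s p \<tau> X H"
  proof
    fix X assume X: "X \<in> (\<lambda>F. mt F H) ` (A - {H})"
    obtain F where F: "F \<in> A - {H}" "X = mt F H" using X by auto
    have P: "is_pdCG p \<tau> F" "covered_s p \<tau> F G" "\<not> t_le p q \<tau> F H" "\<not> t_le p q \<tau> H F" using props[OF F(1)] by auto
    have c: "compat F H" using compat_lem[OF P(1) Hp G P(2) cH P(3,4)] .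
    show "covered_s p \<tau> X H" using covB[OF P(1) Hp G P(2) cH c P(4)] F(2) by simp
  qed
  show ?thesis unfolding Let_def i1 i2 using pw cv by simp
qed

end

theorem corollary11:
  fixes p q :: nat and \<tau> :: "nat \<Rightarrow> nat" and G H :: cgraph and A :: "cgraph set"
  assumes tau: "twin_pairing p \<tau>"
    and LR: "\<tau> ` {1..q} = {q+1..p}"
    and G: "is_pdCG p \<tau> G"
    and A_pd: "\<forall>F\<in>A. is_pdCG p \<tau> F"
    and A_inc: "\<forall>F\<in>A. \<forall>F'\<in>A. F \<noteq> F' \<longrightarrow> \<not> t_le p q \<tau> F F'"
    and A_cov: "\<forall>F\<in>A. covered_s p \<tau> F G"
    and H: "H \<in> A"
  shows "(\<lambda>F. meet_s p \<tau> F H) ` (A - {H}) = (\<lambda>F. meet_t p q \<tau> F H) ` (A - {H}) \<and>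
         (let B = (\<lambda>F. meet_t p q \<tau> F H) ` (A - {H}) in
            (\<forall>F\<in>B. \<forall>F'\<in>B. F \<noteq> F' \<longrightarrow> \<not> t_le p q \<tau> F F') \<and>
            (\<forall>F\<in>B. covered_s p \<tau> F H))"
proof -
  interpret pdl p q \<tau> using tau LR by unfold_locales
  show ?thesis by (rule main[OF G A_pd A_inc A_cov H])
qed

end
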